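(* Let $P=\{p_1,\dots,p_n\}\subset\mathbb{R}^2$ be in convex position, labeled counter-clockwise (indices mod $n$). The affine map $d\mapsto a=(a_1,\dots,a_n)$ given by $$a_i=-\frac{d_{i-1,i+1}}{\det(p_{i-1},p_i,p_{i+1})}+\det(p_{i-1},p_i,p_{i+1})$$ sends, for every triangulation $T$ of $P$, the vertex of $Y$ corresponding to $T$ (the point of $Y$ with $d_{ij}=0$ for all edges $ij$ of $T$) to $(\operatorname{Area}_T(p_1),\dots,\operatorname{Area}_T(p_n))$, the vertex of the secondary polytope of $P$ corresponding to $T$. Consequently it maps the maximal bounded face of $Y$ (the polytope of pointed pseudo-triangulations) onto the secondary polytope of $P$, which is an associahedron.
   Context: $\det(q_0,q_1,q_2)$ is the determinant of the $3\times3$ matrix with columns $(q_0,1),(q_1,1),(q_2,1)$. $\operatorname{Area}_T(p_i)=\sum_{l=1}^{t-1}\det(p_i,p_{j_l},p_{j_{l+1}})$ with $p_{j_1}=p_{i+1},\dots,p_{j_t}=p_{i-1}$ the neighbors of $p_i$ in $T$ in angular order. The secondary polytope of $P$ is the convex hull of the vectors $(\operatorname{Area}_T(p_1),\dots,\operatorname{Area}_T(p_n))$ over all triangulations $T$. $Y\subset\mathbb{R}^{\binom n2}$ (coordinates $d_{ij}=d_{ji}$) is defined by $d_{ij}\le0$ for all pairs and, for every four distinct indices, $\sum w_{\alpha\beta}d_{\alpha\beta}=1$ over the six pairs of the quadruple, with $w_{\alpha\beta}=1/(\det(p_\alpha,p_\beta,p_\gamma)\det(p_\alpha,p_\beta,p_\delta))$,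 $\{\gamma,\delta\}$ the other two indices; its maximal bounded face is obtained by setting $d_{i,i+1}=0$ for all $i$. *)

theory Defs
  imports "HOL-Analysis.Analysis"
begin

text \<open>Points of the plane are pairs of reals. Indices are 0..n-1 (the paper uses 1..n),
  taken modulo n.\<close>

text \<open>det(q0,q1,q2): determinant of the 3x3 matrix with columns (q0,1),(q1,1),(q2,1),
  expanded.\<close>
definition det3 :: "real \<times> real \<Rightarrow> real \<times> real \<Rightarrow> real \<times> real \<Rightarrow> real" where
  "det3 q0 q1 q2 =
     fst q0 * snd q1 + fst q1 * snd q2 + fst q2 * snd q0
   - fst q0 * snd q2 - fst q1 * snd q0 - fst q2 * snd q1"

definition convex_ccw :: "nat \<Rightarrow> (nat \<Rightarrow> real \<times> real) \<Rightarrow> bool" where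
  "convex_ccw n p \<longleftrightarrow> 3 \<le> n \<and>
     (\<forall>i j k. i < j \<and> j < k \<and> k < n \<longrightarrow> det3 (p i) (p j) (p k) > 0)"

definition segs :: "nat \<Rightarrow> nat set set" where
  "segs n = {{i, j} | i j. i < j \<and> j < n}"

text \<open>Two segments {a,b}, {c,e} (a<b, c<e) cross in the interior iff their endpoints
  interleave in the cyclic (= convex) order.\<close>
definition crossing :: "nat set \<Rightarrow> nat set \<Rightarrow> bool" where
  "crossing s t \<longleftrightarrow> (\<exists>a b c e. s = {a, b} \<and> t = {c, e} \<and> a < c \<and> c < b \<and> b < e)"

definition noncrossing :: "nat set \<Rightarrow> nat set \<Rightarrow> bool" where
  "noncrossing s t \<longleftrightarrow> \<not> crossing s t \<and> \<not> crossing t s"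

text \<open>A convex_triangulation of a point set in convex position, given by its edge set:
  a maximal set of pairwise non-crossing segments (it then contains all hull edges).
  We also state the hull edges explicitly.\<close>
definition convex_triangulation :: "nat \<Rightarrow> nat set set \<Rightarrow> bool" where
  "convex_triangulation n T \<longleftrightarrow> T \<subseteq> segs n \<and>
     (\<forall>i<n. {i, Suc i mod n} \<in> T) \<and>
     (\<forall>s\<in>T. \<forall>t\<in>T. noncrossing s t) \<and>
     (\<forall>s\<in>segs n. s \<notin> T \<longrightarrow> (\<exists>t\<in>T. \<not> noncrossing s t))"

text \<open>Neighbours of p_i in T in angular order, from p_{i+1} to p_{i-1}: for points in convex
  position labeled counter-clockwise this is the cyclic index order, encoded here by the
  sorted offsets k (neighbour (i+k) mod n).\<close>
definition nbr_offsets :: "nat \<Rightarrow> nat set set \<Rightarrow> nat \<Rightarrow> nat list" where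
  "nbr_offsets n T i = sorted_list_of_set {k. 0 < k \<and> k < n \<and> {i, (i + k) mod n} \<in> T}"

definition AreaT :: "nat \<Rightarrow> (nat \<Rightarrow> real \<times> real) \<Rightarrow> nat set set \<Rightarrow> nat \<Rightarrow> real" where
  "AreaT n p T i = (let ks = nbr_offsets n T i in
     (\<Sum>l < length ks - 1. det3 (p i) (p ((i + ks ! l) mod n)) (p ((i + ks ! Suc l) mod n))))"

definition area_vec :: "nat \<Rightarrow> (nat \<Rightarrow> real \<times> real) \<Rightarrow> nat set set \<Rightarrow> nat \<Rightarrow> real" where
  "area_vec n p T = (\<lambda>i. if i < n then AreaT n p T i else 0)"

definition cvx_comb_hull :: "(nat \<Rightarrow> real) set \<Rightarrow> (nat \<Rightarrow> real) set" where
  "cvx_comb_hull S = {x. \<exists>(m::nat) c v. (\<forall>l<m. 0 \<le> c l \<and> v l \<in> S) \<and> (\<Sum>l<m. c l) = 1 \<and>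
                          x = (\<lambda>j. \<Sum>l<m. c l * v l j)}"

definition secondary_polytope :: "nat \<Rightarrow> (nat \<Rightarrow> real \<times> real) \<Rightarrow> (nat \<Rightarrow> real) set" where
  "secondary_polytope n p = cvx_comb_hull {area_vec n p T | T. convex_triangulation n T}"

definition wgt :: "(nat \<Rightarrow> real \<times> real) \<Rightarrow> nat \<Rightarrow> nat \<Rightarrow> nat \<Rightarrow> nat \<Rightarrow> real" where
  "wgt p a b c e = 1 / (det3 (p a) (p b) (p c) * det3 (p a) (p b) (p e))"

text \<open>Points d of R^(n choose 2): functions on 2-element index sets, zero elsewhere.
  d {i,j} is the coordinate d_ij = d_ji.\<close>
definition Yset :: "nat \<Rightarrow> (nat \<Rightarrow> real \<times> real) \<Rightarrow> (nat set \<Rightarrow> real) set" where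
  "Yset n p = {d. (\<forall>s. s \<notin> segs n \<longrightarrow> d s = 0) \<and>
      (\<forall>s\<in>segs n. d s \<le> 0) \<and>
      (\<forall>a b c e. a < n \<and> b < n \<and> c < n \<and> e < n \<and> distinct [a, b, c, e] \<longrightarrow>
          wgt p a b c e * d {a, b} + wgt p a c b e * d {a, c} + wgt p a e b c * d {a, e}
        + wgt p b c a e * d {b, c} + wgt p b e a c * d {b, e} + wgt p c e a b * d {c, e} = 1)}"

text \<open>The maximal bounded face of Y: d_{i,i+1} = 0 for all i.\<close>
definition Yface :: "nat \<Rightarrow> (nat \<Rightarrow> real \<times> real) \<Rightarrow> (nat set \<Rightarrow> real) set" where
  "Yface n p = {d \<in> Yset n p. \<forall>i<n. d {i, Suc i mod n} = 0}"

definition amap :: "nat \<Rightarrow> (nat \<Rightarrow> real \<times> real) \<Rightarrow> (nat set \<Rightarrow> real) \<Rightarrow> nat \<Rightarrow> real" where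
  "amap n p d = (\<lambda>i. if i < n then
      (let D = det3 (p ((i + n - 1) mod n)) (p i) (p (Suc i mod n))
       in - d {(i + n - 1) mod n, Suc i mod n} / D + D)
    else 0)"

end

theory Submission
  imports Defs
begin

definition tau :: "(real \<times> real \<Rightarrow> real) \<Rightarrow> real \<times> real \<Rightarrow> real \<times> real \<Rightarrow> real" where
  "tau g u v = det3 (0,0) u v * (g (0,0) + g u + g v)"

lemma det3_cyc: "det3 a b c = det3 b c a" by (simp add: det3_def algebra_simps)
lemma det3_swap: "det3 a c b = - det3 a b c" by (simp add: det3_def algebra_simps)
lemma det3_swap1: "det3 b a c = - det3 a b c" by (simp add: det3_def algebra_simps)
lemma det3_same: "det3 a a b = 0" "det3 a b a = 0" "det3 a b b = 0" by (simp_all add: det3_def algebra_simps)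

lemma E1:
  fixes a b c e z :: "real \<times> real"
  assumes "det3 a b c \<noteq> 0" "det3 a b e \<noteq> 0" "det3 a c e \<noteq> 0" "det3 b c e \<noteq> 0"
  shows "1 / (det3 a b c * det3 a b e) * det3 a z b + 1 / (det3 a c b * det3 a c e) * det3 a z c
    + 1 / (det3 a e b * det3 a e c) * det3 a z e = 0"
proof -
  have 1: "det3 a c b = - det3 a b c" "det3 a e b = - det3 a b e" "det3 a e c = - det3 a c e" by (simp_all add: det3_def algebra_simps)
  have f: "\<And>A B C x y w::real. A \<noteq> 0 \<Longrightarrow> B \<noteq> 0 \<Longrightarrow> C \<noteq> 0 \<Longrightarrow>
     1/(A*B)*x + 1/(-A*C)*y + 1/((-B)*(-C))*w = (x*C - y*B + w*A)/(A*B*C)"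
    by (simp add: field_simps)
  have p: "det3 a z b * det3 a c e - det3 a z c * det3 a b e + det3 a z e * det3 a b c = 0"
    unfolding det3_def by algebra
  show ?thesis using assms unfolding 1 f[OF assms(1-3)] p by simp
qed

lemma E2:
  fixes a b c e z :: "real \<times> real"
  assumes "det3 a b c \<noteq> 0" "det3 a b e \<noteq> 0" "det3 a c e \<noteq> 0" "det3 b c e \<noteq> 0"
  shows "- (1 / (det3 a b c * det3 a b e) * det3 a z b) + 1 / (det3 b c a * det3 b c e) * det3 b z c
    + 1 / (det3 b e a * det3 b e c) * det3 b z e = 0"
proof -
  have 1: "det3 b c a = det3 a b c" "det3 b e a = det3 a b e" "det3 b e c = - det3 b c e" by (simp_all add: det3_def algebra_simps)
  have f: "\<And>A B D x y w::real. A \<noteq> 0 \<Longrightarrow> B \<noteq> 0 \<Longrightarrow> D \<noteq> 0 \<Longrightarrow>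
     - (1/(A*B)*x) + 1/(A*D)*y + 1/(B*(-D))*w = (- x*D + y*B - w*A)/(A*B*D)"
    by (simp add: field_simps)
  have p: "- det3 a z b * det3 b c e + det3 b z c * det3 a b e - det3 b z e * det3 a b c = 0"
    unfolding det3_def by algebra
  show ?thesis using assms unfolding 1 f[OF assms(1,2,4)] p by simp
qed

lemma E3:
  fixes a b c e z :: "real \<times> real"
  assumes "det3 a b c \<noteq> 0" "det3 a b e \<noteq> 0" "det3 a c e \<noteq> 0" "det3 b c e \<noteq> 0"
  shows "1 / (det3 a e b * det3 a e c) * det3 a z e + 1 / (det3 b e a * det3 b e c) * det3 b z e
    + 1 / (det3 c e a * det3 c e b) * det3 c z e = 0"
proof -
  have 1: "det3 a e b = - det3 a b e" "det3 a e c = - det3 a c e" "det3 b e a = det3 a b e" "det3 b e c = - det3 b c e"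
    "det3 c e a = det3 a c e" "det3 c e b = det3 b c e" by (simp_all add: det3_def algebra_simps)
  have f: "\<And>B C D x y w::real. B \<noteq> 0 \<Longrightarrow> C \<noteq> 0 \<Longrightarrow> D \<noteq> 0 \<Longrightarrow>
     1/((-B)*(-C))*x + 1/(B*(-D))*y + 1/(C*D)*w = (x*D - y*C + w*B)/(B*C*D)"
    by (simp add: field_simps)
  have p: "det3 a z e * det3 b c e - det3 b z e * det3 a c e + det3 c z e * det3 a b e = 0"
    unfolding det3_def by algebra
  show ?thesis using assms unfolding 1 f[OF assms(2-4)] p by simp
qed

lemma frac6:
  fixes A B C Dd x1 x2 x3 x4 x5 x6 :: real
  assumes "A \<noteq> 0" "B \<noteq> 0" "C \<noteq> 0" "Dd \<noteq> 0"
   and P: "x1*C*Dd - x2*B*Dd + x3*A*Dd + x4*B*C - x5*A*C + x6*A*B = A*B*C*Dd"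
  shows "1 / (A*B) * x1 + 1 / (-A*C) * x2 + 1/((-B)*(-C)) * x3 + 1/(A*Dd) * x4 + 1/(B*(-Dd)) * x5 + 1/(C*Dd) * x6 = 1"
proof -
  have "1 / (A*B) * x1 + 1 / (-A*C) * x2 + 1/((-B)*(-C)) * x3 + 1/(A*Dd) * x4 + 1/(B*(-Dd)) * x5 + 1/(C*Dd) * x6
     = (x1*C*Dd - x2*B*Dd + x3*A*Dd + x4*B*C - x5*A*C + x6*A*B) / (A*B*C*Dd)"
    using assms(1-4) by (simp add: field_simps)
  also have "\<dots> = 1" using P assms(1-4) by simp
  finally show ?thesis .
qed

lemma key2:
  fixes sab sac sae sbc sbe sce :: real
  assumes "sab * sce - sac * sbe + sae * sbc = 0"
  shows "sab^2 * (sac + sce - sae) * (sbc + sce - sbe) - sac^2 * (sab + sbe - sae) * (sbc + sce - sbe)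
   + sae^2 * (sab + sbc - sac) * (sbc + sce - sbe) + sbc^2 * (sab + sbe - sae) * (sac + sce - sae)
   - sbe^2 * (sab + sbc - sac) * (sac + sce - sae) + sce^2 * (sab + sbc - sac) * (sab + sbe - sae)
   = (sab + sbc - sac) * (sab + sbe - sae) * (sac + sce - sae) * (sbc + sce - sbe)"
  using assms by algebra

lemma E4:
  fixes a b c e :: "real \<times> real"
  assumes "det3 a b c \<noteq> 0" "det3 a b e \<noteq> 0" "det3 a c e \<noteq> 0" "det3 b c e \<noteq> 0"
  shows "1 / (det3 a b c * det3 a b e) * tau (\<lambda>z. det3 a z b) b a
       + 1 / (det3 a c b * det3 a c e) * tau (\<lambda>z. det3 a z c) c a
       + 1 / (det3 a e b * det3 a e c) * tau (\<lambda>z. det3 a z e) e a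
       + 1 / (det3 b c a * det3 b c e) * tau (\<lambda>z. det3 b z c) c b
       + 1 / (det3 b e a * det3 b e c) * tau (\<lambda>z. det3 b z e) e b
       + 1 / (det3 c e a * det3 c e b) * tau (\<lambda>z. det3 c z e) e c = 1"
proof -
  have 1: "det3 a c b = - det3 a b c" "det3 a e b = - det3 a b e" "det3 a e c = - det3 a c e" 
    "det3 b c a = det3 a b c" "det3 b e a = det3 a b e" "det3 b e c = - det3 b c e"
    "det3 c e a = det3 a c e" "det3 c e b = det3 b c e" by (simp_all add: det3_def algebra_simps)
  have t: "\<And>x y. tau (\<lambda>z. det3 x z y) y x = (det3 (0,0) x y)^2"
    unfolding tau_def det3_def by (simp add: power2_eq_square algebra_simps)
  define sab where "sab = det3 (0,0) a b"
  define sac where "sac = det3 (0,0) a c"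
  define sae where "sae = det3 (0,0) a e"
  define sbc where "sbc = det3 (0,0) b c"
  define sbe where "sbe = det3 (0,0) b e"
  define sce where "sce = det3 (0,0) c e"
  have A: "det3 a b c = sab + sbc - sac" "det3 a b e = sab + sbe - sae" "det3 a c e = sac + sce - sae"
    "det3 b c e = sbc + sce - sbe"
    unfolding sab_def sac_def sae_def sbc_def sbe_def sce_def det3_def by (simp_all add: algebra_simps)
  have pl: "sab * sce - sac * sbe + sae * sbc = 0"
    unfolding sab_def sac_def sae_def sbc_def sbe_def sce_def det3_def by (simp add: algebra_simps)
  have P: "sab^2 * det3 a c e * det3 b c e - sac^2 * det3 a b e * det3 b c e + sae^2 * det3 a b c * det3 b c e
     + sbc^2 * det3 a b e * det3 a c e - sbe^2 * det3 a b c * det3 a c e + sce^2 * det3 a b c * det3 a b e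
     = det3 a b c * det3 a b e * det3 a c e * det3 b c e"
    using key2[OF pl] unfolding A .
  show ?thesis unfolding 1 t sab_def[symmetric] sac_def[symmetric] sae_def[symmetric] sbc_def[symmetric]
      sbe_def[symmetric] sce_def[symmetric]
    by (rule frac6[OF assms P])
qed

lemma tri_tau:
  assumes "\<forall>z. g z = \<alpha> * fst z + \<beta> * snd z + \<gamma>"
  shows "tau g u v + tau g v w + tau g w u = det3 u v w * (g u + g v + g w)"
proof -
  have h: "\<And>z. g z = \<alpha> * fst z + \<beta> * snd z + \<gamma>" using assms by auto
  show ?thesis unfolding tau_def h det3_def by (simp add: algebra_simps)
qed


definition cyc :: "nat \<Rightarrow> nat \<Rightarrow> nat \<Rightarrow> bool" where
  "cyc a b c \<longleftrightarrow> (a < b \<and> b < c) \<or> (b < c \<and> c < a) \<or> (c < a \<and> a < b)"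

definition xing :: "nat \<Rightarrow> nat \<Rightarrow> nat \<Rightarrow> nat \<Rightarrow> bool" where
  "xing i j k l \<longleftrightarrow> i \<noteq> j \<and> i \<noteq> k \<and> i \<noteq> l \<and> j \<noteq> k \<and> j \<noteq> l \<and> k \<noteq> l
     \<and> (cyc i k j \<longleftrightarrow> \<not> cyc i l j)"

definition cyci :: "int \<Rightarrow> int \<Rightarrow> int \<Rightarrow> bool" where
  "cyci a b c \<longleftrightarrow> (a < b \<and> b < c) \<or> (b < c \<and> c < a) \<or> (c < a \<and> a < b)"

definition xingi :: "int \<Rightarrow> int \<Rightarrow> int \<Rightarrow> int \<Rightarrow> bool" where
  "xingi i j k l \<longleftrightarrow> i \<noteq> j \<and> i \<noteq> k \<and> i \<noteq> l \<and> j \<noteq> k \<and> j \<noteq> l \<and> k \<noteq> l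
     \<and> (cyci i k j \<longleftrightarrow> \<not> cyci i l j)"

lemma cyc_int: "cyc a b c \<longleftrightarrow> cyci (int a) (int b) (int c)"
  unfolding cyc_def cyci_def by simp

lemma xing_int: "xing a b c d \<longleftrightarrow> xingi (int a) (int b) (int c) (int d)"
  unfolding xing_def xingi_def cyc_int by simp

lemma t1i: "xingi i j k l \<Longrightarrow> (min i j < min k l \<and> min k l < max i j \<and> max i j < max k l) \<or>
          (min k l < min i j \<and> min i j < max k l \<and> max k l < max i j)"
  unfolding xingi_def cyci_def min_def max_def by (smt (verit))

lemma noncrossing_iff:
  assumes "i \<noteq> j" "k \<noteq> l"
  shows "noncrossing {i, j} {k, l} \<longleftrightarrow> \<not> xing i j k l"
proof
  assume nc: "noncrossing {i, j} {k, l}"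
  show "\<not> xing i j k l"
  proof
    assume x: "xing i j k l"
    have "(min i j < min k l \<and> min k l < max i j \<and> max i j < max k l) \<or>
          (min k l < min i j \<and> min i j < max k l \<and> max k l < max i j)"
      using t1i[of "int i" "int j" "int k" "int l"] x unfolding xing_int by (simp add: min_def max_def split: if_splits)
    moreover have "{i, j} = {min i j, max i j}" "{k, l} = {min k l, max k l}"
      by (auto simp: min_def max_def)
    ultimately show False using nc unfolding noncrossing_def crossing_def by metis
  qed
next
  assume nx: "\<not> xing i j k l"
  have "\<not> crossing {i, j} {k, l}"
  proof
    assume "crossing {i, j} {k, l}"
    then obtain a b c e where "{i, j} = {a, b}" "{k, l} = {c, e}" "a < c" "c < b" "b < e"
      unfolding crossing_def by blast
    then show False using nx unfolding xing_def cyc_def doubleton_eq_iff by (elim disjE conjE; simp; linarith)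
  qed
  moreover have "\<not> crossing {k, l} {i, j}"
  proof
    assume "crossing {k, l} {i, j}"
    then obtain a b c e where "{k, l} = {a, b}" "{i, j} = {c, e}" "a < c" "c < b" "b < e"
      unfolding crossing_def by blast
    then show False using nx unfolding xing_def cyc_def doubleton_eq_iff by (elim disjE conjE; simp; linarith)
  qed
  ultimately show "noncrossing {i, j} {k, l}" unfolding noncrossing_def by blast
qed

lemma noncrossing_sym: "noncrossing s t \<longleftrightarrow> noncrossing t s"
  unfolding noncrossing_def by blast

lemma segs_iff: "{i, j} \<in> segs n \<longleftrightarrow> i \<noteq> j \<and> i < n \<and> j < n"
proof
  assume "{i, j} \<in> segs n"
  then obtain a b where "{i, j} = {a, b}" "a < b" "b < n" unfolding segs_def by blast
  then show "i \<noteq> j \<and> i < n \<and> j < n" unfolding doubleton_eq_iff by auto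
next
  assume "i \<noteq> j \<and> i < n \<and> j < n"
  then show "{i, j} \<in> segs n" unfolding segs_def
    by (cases "i < j") (auto, metis insert_commute linorder_neqE_nat)
qed

lemma segsE:
  assumes "s \<in> segs n"
  obtains i j where "s = {i, j}" "i < j" "j < n"
  using assms unfolding segs_def by blast

lemma finite_segs: "finite (segs n)"
proof -
  have "segs n \<subseteq> Pow {..<n}" unfolding segs_def by auto
  then show ?thesis by (rule finite_subset) auto
qed

lemma noncrossing_self: "s \<in> segs n \<Longrightarrow> noncrossing s s"
  by (erule segsE) (simp add: noncrossing_iff xing_def)

lemma cyc_distinct: "distinct [a, b, c] \<Longrightarrow> cyc a b c \<or> cyc a c b"
  unfolding cyc_def by auto

lemma cyc_rot: "cyc a b c \<longleftrightarrow> cyc b c a" unfolding cyc_def by auto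

lemma cyc_not: "cyc a b c \<Longrightarrow> \<not> cyc a c b" unfolding cyc_def by auto

lemma cyc_dist: "cyc a b c \<Longrightarrow> a \<noteq> b \<and> b \<noteq> c \<and> a \<noteq> c" unfolding cyc_def by auto


context
  fixes n :: nat and p :: "nat \<Rightarrow> real \<times> real"
  assumes cc: "convex_ccw n p"
begin

lemma n3: "3 \<le> n" using cc unfolding convex_ccw_def by simp

lemma det_pos:
  assumes "i < n" "j < n" "k < n" "cyc i j k"
  shows "det3 (p i) (p j) (p k) > 0"
proof -
  have inc: "\<And>a b c. a < b \<Longrightarrow> b < c \<Longrightarrow> c < n \<Longrightarrow> det3 (p a) (p b) (p c) > 0"
    using cc unfolding convex_ccw_def by blast
  from assms(4) consider "i < j \<and> j < k" | "j < k \<and> k < i" | "k < i \<and> i < j" unfolding cyc_def by blast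
  then show ?thesis
  proof cases
    case 1 then show ?thesis using inc assms by blast
  next
    case 2 then show ?thesis using inc[of j k i] assms det3_cyc[of "p i" "p j" "p k"] by simp
  next
    case 3 then show ?thesis using inc[of k i j] assms det3_cyc[of "p k" "p i" "p j"] by simp
  qed
qed

lemma det_neg:
  assumes "i < n" "j < n" "k < n" "cyc i k j"
  shows "det3 (p i) (p j) (p k) < 0"
  using det_pos[OF assms(1,3,2,4)] det3_swap[of "p i" "p k" "p j"] by simp

lemma det_nz:
  assumes "i < n" "j < n" "k < n" "distinct [i, j, k]"
  shows "det3 (p i) (p j) (p k) \<noteq> 0"
  using cyc_distinct[OF assms(4)] det_pos[OF assms(1-3)] det_neg[OF assms(1-3)] by force

end



definition hh :: "(nat \<Rightarrow> real \<times> real) \<Rightarrow> nat \<Rightarrow> nat \<Rightarrow> real \<times> real \<Rightarrow> real" where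
  "hh p i j z = det3 (p i) z (p j)"

definition Sg :: "(nat \<Rightarrow> real \<times> real) \<Rightarrow> (real \<times> real \<Rightarrow> real) \<Rightarrow> nat \<Rightarrow> nat \<Rightarrow> real" where
  "Sg p g i j = (\<Sum>k\<in>{i..<j}. tau g (p k) (p (Suc k))) + tau g (p j) (p i)"

definition Phi :: "(nat \<Rightarrow> real \<times> real) \<Rightarrow> (nat \<Rightarrow> real) \<Rightarrow> nat \<Rightarrow> nat \<Rightarrow> real" where
  "Phi p a i j = Sg p (hh p i j) i j - (\<Sum>k\<in>{i<..<j}. hh p i j (p k) * a k)"

definition dPhi :: "nat \<Rightarrow> (nat \<Rightarrow> real \<times> real) \<Rightarrow> (nat \<Rightarrow> real) \<Rightarrow> nat set \<Rightarrow> real" where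
  "dPhi n p a s = (if s \<in> segs n then Phi p a (Min s) (Max s) else 0)"

definition Qx :: "(nat \<Rightarrow> real \<times> real) \<Rightarrow> (nat set \<Rightarrow> real) \<Rightarrow> nat \<Rightarrow> nat \<Rightarrow> nat \<Rightarrow> nat \<Rightarrow> real" where
  "Qx p d a b c e = wgt p a b c e * d {a, b} + wgt p a c b e * d {a, c} + wgt p a e b c * d {a, e}
        + wgt p b c a e * d {b, c} + wgt p b e a c * d {b, e} + wgt p c e a b * d {c, e}"

definition Lq :: "nat \<Rightarrow> (nat \<Rightarrow> real \<times> real) \<Rightarrow> (nat set \<Rightarrow> real) \<Rightarrow> bool" where
  "Lq n p d \<longleftrightarrow> (\<forall>a b c e. a < n \<and> b < n \<and> c < n \<and> e < n \<and> distinct [a, b, c, e] \<longrightarrow> Qx p d a b c e = 1)"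

definition aff2 :: "(real \<times> real \<Rightarrow> real) \<Rightarrow> bool" where
  "aff2 g \<longleftrightarrow> (\<exists>\<alpha> \<beta> \<gamma>. \<forall>z. g z = \<alpha> * fst z + \<beta> * snd z + \<gamma>)"

lemma Yset_iff: "d \<in> Yset n p \<longleftrightarrow> (\<forall>s. s \<notin> segs n \<longrightarrow> d s = 0) \<and> (\<forall>s\<in>segs n. d s \<le> 0) \<and> Lq n p d"
  unfolding Yset_def Lq_def Qx_def by simp

lemma wgt_sym1: "wgt p a b c e = wgt p b a c e"
  unfolding wgt_def using det3_swap1[of "p a" "p b"] by simp

lemma wgt_sym2: "wgt p a b c e = wgt p a b e c"
  unfolding wgt_def by (simp add: mult.commute)

lemma Qx_12: "Qx p d a b c e = Qx p d b a c e"
  unfolding Qx_def using wgt_sym1[of p] wgt_sym2[of p] by (simp add: insert_commute algebra_simps)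

lemma Qx_23: "Qx p d a b c e = Qx p d a c b e"
  unfolding Qx_def using wgt_sym1[of p] wgt_sym2[of p] by (simp add: insert_commute algebra_simps)

lemma Qx_34: "Qx p d a b c e = Qx p d a b e c"
  unfolding Qx_def using wgt_sym1[of p] wgt_sym2[of p] by (simp add: insert_commute algebra_simps)

lemma Lq_sorted:
  assumes H: "\<And>a b c e. a < b \<Longrightarrow> b < c \<Longrightarrow> c < e \<Longrightarrow> e < n \<Longrightarrow> Qx p d a b c e = 1"
  shows "Lq n p d"
proof -
  have H3: "Qx p d a b c e = 1" if "a < b" "a < c" "a < e" "distinct [b, c, e]" "b < n" "c < n" "e < n" for a b c e
  proof -
    from that consider "b < c \<and> c < e" | "b < e \<and> e < c" | "c < b \<and> b < e" | "c < e \<and> e < b"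
      | "e < b \<and> b < c" | "e < c \<and> c < b" by fastforce
    then show ?thesis
    proof cases
      case 1 then show ?thesis using H that by blast
    next
      case 2 then show ?thesis using H[of a b e c] that Qx_34[of p d a b c e] by simp
    next
      case 3 then show ?thesis using H[of a c b e] that Qx_23[of p d a b c e] by simp
    next
      case 4 then show ?thesis using H[of a c e b] that Qx_23[of p d a b c e] Qx_34[of p d a c b e] by simp
    next
      case 5 then show ?thesis using H[of a e b c] that Qx_34[of p d a b c e] Qx_23[of p d a b e c] by simp
    next
      case 6 then show ?thesis using H[of a e c b] that Qx_23[of p d a b c e] Qx_34[of p d a c b e]
          Qx_23[of p d a c e b] by simp
    qed
  qed
  show ?thesis unfolding Lq_def
  proof (intro allI impI)
    fix a b c e assume A: "a < n \<and> b < n \<and> c < n \<and> e < n \<and> distinct [a, b, c, e]"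
    consider "a < b \<and> a < c \<and> a < e" | "b < a \<and> b < c \<and> b < e" | "c < a \<and> c < b \<and> c < e"
      | "e < a \<and> e < b \<and> e < c" using A by fastforce
    then show "Qx p d a b c e = 1"
    proof cases
      case 1 then show ?thesis using H3 A by simp
    next
      case 2 then show ?thesis using H3[of b a c e] A Qx_12[of p d a b c e] by simp
    next
      case 3 then show ?thesis using H3[of c a b e] A Qx_23[of p d a b c e] Qx_12[of p d a c b e] by auto
    next
      case 4 then show ?thesis using H3[of e a b c] A Qx_34[of p d a b c e] Qx_23[of p d a b e c]
          Qx_12[of p d a e b c] by auto
    qed
  qed
qed

lemma tau_anti: "tau g u v = - tau g v u"
  unfolding tau_def det3_def by (simp add: algebra_simps)

lemma aff2_hh: "aff2 (hh p i j)"
  unfolding aff2_def hh_def det3_def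
  by (rule exI[of _ "snd (p j) - snd (p i)"], rule exI[of _ "fst (p i) - fst (p j)"],
      rule exI[of _ "fst (p j) * snd (p i) - fst (p i) * snd (p j)"]) (simp add: algebra_simps)

lemma Sg_adj: "Sg p g i (Suc i) = 0"
  unfolding Sg_def using tau_anti[of g "p i" "p (Suc i)"] by simp

lemma Sg_split:
  assumes "i \<le> m" "m \<le> j" "aff2 g"
  shows "Sg p g i j = Sg p g i m + Sg p g m j + det3 (p i) (p m) (p j) * (g (p i) + g (p m) + g (p j))"
proof -
  obtain \<alpha> \<beta> \<gamma> where g: "\<forall>z. g z = \<alpha> * fst z + \<beta> * snd z + \<gamma>" using assms(3) unfolding aff2_def by blast
  have s: "(\<Sum>k\<in>{i..<j}. tau g (p k) (p (Suc k))) = (\<Sum>k\<in>{i..<m}. tau g (p k) (p (Suc k))) + (\<Sum>k\<in>{m..<j}. tau g (p k) (p (Suc k)))"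
    by (rule sum.atLeastLessThan_concat[OF assms(1,2), symmetric])
  have t: "tau g (p i) (p m) + tau g (p m) (p j) + tau g (p j) (p i) = det3 (p i) (p m) (p j) * (g (p i) + g (p m) + g (p j))"
    by (rule tri_tau[OF g])
  show ?thesis unfolding Sg_def s using t tau_anti[of g "p m" "p i"] tau_anti[of g "p j" "p m"] by simp
qed

lemma Phi_adj: "Phi p a i (Suc i) = 0"
proof -
  have "{i<..<Suc i} = {}" by auto
  then show ?thesis unfolding Phi_def by (simp add: Sg_adj)
qed

lemma Phi_special:
  "Phi p a i (Suc (Suc i)) = det3 (p i) (p (Suc i)) (p (Suc (Suc i))) ^ 2
      - det3 (p i) (p (Suc i)) (p (Suc (Suc i))) * a (Suc i)"
proof -
  have S: "Sg p (hh p i (Suc (Suc i))) i (Suc (Suc i)) = det3 (p i) (p (Suc i)) (p (Suc (Suc i))) ^ 2"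
    using Sg_split[of i "Suc i" "Suc (Suc i)" "hh p i (Suc (Suc i))" p] aff2_hh[of p i "Suc (Suc i)"]
    by (simp add: Sg_adj hh_def det3_same power2_eq_square)
  have "{i<..<Suc (Suc i)} = {Suc i}" by auto
  then show ?thesis unfolding Phi_def S by (simp add: hh_def)
qed

lemma sum_restrict:
  fixes a x y e :: nat and f :: "nat \<Rightarrow> real"
  assumes "a \<le> x" "y \<le> e"
  shows "(\<Sum>k\<in>{x..<y}. f k) = (\<Sum>k\<in>{a..<e}. of_bool (x \<le> k \<and> k < y) * f k)"
proof -
  have "{k\<in>{a..<e}. x \<le> k \<and> k < y} = {x..<y}" using assms by (auto intro: le_trans less_le_trans)
  moreover have "(\<Sum>k\<in>{a..<e}. of_bool (x \<le> k \<and> k < y) * f k) = (\<Sum>k\<in>{a..<e}. if x \<le> k \<and> k < y then f k else 0)"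
    by (rule sum.cong) auto
  ultimately show ?thesis using sum.inter_filter[of "{a..<e}" f "\<lambda>k. x \<le> k \<and> k < y"] by simp
qed

lemma sum_restrict2:
  fixes a x y e :: nat and f :: "nat \<Rightarrow> real"
  assumes "a \<le> x" "y \<le> e"
  shows "(\<Sum>k\<in>{x<..<y}. f k) = (\<Sum>k\<in>{a<..<e}. of_bool (x < k \<and> k < y) * f k)"
proof -
  have "{k\<in>{a<..<e}. x < k \<and> k < y} = {x<..<y}" using assms by (auto intro: le_less_trans less_le_trans)
  moreover have "(\<Sum>k\<in>{a<..<e}. of_bool (x < k \<and> k < y) * f k) = (\<Sum>k\<in>{a<..<e}. if x < k \<and> k < y then f k else 0)"
    by (rule sum.cong) auto
  ultimately show ?thesis using sum.inter_filter[of "{a<..<e}" f "\<lambda>k. x < k \<and> k < y"] by simp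
qed

context
  fixes n :: nat and p :: "nat \<Rightarrow> real \<times> real"
  assumes cc: "convex_ccw n p"
begin

lemma quad_Phi:
  assumes abce: "a < b" "b < c" "c < e" "e < n"
  shows "wgt p a b c e * Phi p aa a b + wgt p a c b e * Phi p aa a c + wgt p a e b c * Phi p aa a e
        + wgt p b c a e * Phi p aa b c + wgt p b e a c * Phi p aa b e + wgt p c e a b * Phi p aa c e = 1"
proof -
  have nz: "det3 (p a) (p b) (p c) \<noteq> 0" "det3 (p a) (p b) (p e) \<noteq> 0" "det3 (p a) (p c) (p e) \<noteq> 0"
    "det3 (p b) (p c) (p e) \<noteq> 0" using det_nz[OF cc] abce by auto
  define wab where "wab = wgt p a b c e"
  define wac where "wac = wgt p a c b e"
  define wae where "wae = wgt p a e b c"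
  define wbc where "wbc = wgt p b c a e"
  define wbe where "wbe = wgt p b e a c"
  define wce where "wce = wgt p c e a b"
  note wdefs = wab_def wac_def wae_def wbc_def wbe_def wce_def
  have e1: "\<And>z. wab * hh p a b z + wac * hh p a c z + wae * hh p a e z = 0"
    unfolding wdefs wgt_def hh_def using E1[OF nz] by simp
  have e2: "\<And>z. - (wab * hh p a b z) + wbc * hh p b c z + wbe * hh p b e z = 0"
    unfolding wdefs wgt_def hh_def using E2[OF nz] by simp
  have e3: "\<And>z. wae * hh p a e z + wbe * hh p b e z + wce * hh p c e z = 0"
    unfolding wdefs wgt_def hh_def using E3[OF nz] by simp
  have e4: "wab * tau (hh p a b) (p b) (p a) + wac * tau (hh p a c) (p c) (p a) + wae * tau (hh p a e) (p e) (p a)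
     + wbc * tau (hh p b c) (p c) (p b) + wbe * tau (hh p b e) (p e) (p b) + wce * tau (hh p c e) (p e) (p c) = 1"
    unfolding wdefs wgt_def using E4[OF nz] by (simp add: hh_def[abs_def])
  define G where "G k z = of_bool (a \<le> k \<and> k < b) * wab * hh p a b z + of_bool (a \<le> k \<and> k < c) * wac * hh p a c z
     + of_bool (a \<le> k \<and> k < e) * wae * hh p a e z + of_bool (b \<le> k \<and> k < c) * wbc * hh p b c z
     + of_bool (b \<le> k \<and> k < e) * wbe * hh p b e z + of_bool (c \<le> k \<and> k < e) * wce * hh p c e z" for k z
  have G0: "G k z = 0" if "a \<le> k" "k < e" for k z
  proof -
    consider "k < b" | "b \<le> k \<and> k < c" | "c \<le> k" by linarith
    then show ?thesis
    proof cases
      case 1 then show ?thesis unfolding G_def using that abce e1[of z] by simp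
    next
      case 2 then show ?thesis unfolding G_def using that abce e1[of z] e2[of z] by simp
    next
      case 3 then show ?thesis unfolding G_def using that abce e3[of z] by simp
    qed
  qed
  define H where "H k = of_bool (a < k \<and> k < b) * wab * hh p a b (p k) + of_bool (a < k \<and> k < c) * wac * hh p a c (p k)
     + of_bool (a < k \<and> k < e) * wae * hh p a e (p k) + of_bool (b < k \<and> k < c) * wbc * hh p b c (p k)
     + of_bool (b < k \<and> k < e) * wbe * hh p b e (p k) + of_bool (c < k \<and> k < e) * wce * hh p c e (p k)" for k
  have H0: "H k = 0" if "a < k" "k < e" for k
  proof -
    have hz: "hh p x y (p x) = 0" "hh p x y (p y) = 0" for x y unfolding hh_def by (simp_all add: det3_same)
    have "H k = G k (p k)"
    proof -
      consider "k = b" | "k = c" | "k \<noteq> b \<and> k \<noteq> c" by blast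
      then show ?thesis
      proof cases
        case 1 then show ?thesis unfolding H_def G_def using that abce hz by simp
      next
        case 2 then show ?thesis unfolding H_def G_def using that abce hz by simp
      next
        case 3 then show ?thesis unfolding H_def G_def using that abce by (simp add: le_less)
      qed
    qed
    then show ?thesis using G0 that by simp
  qed
  have Sg_eq: "Sg p (hh p x y) x y = (\<Sum>k\<in>{a..<e}. of_bool (x \<le> k \<and> k < y) * tau (hh p x y) (p k) (p (Suc k)))
      + tau (hh p x y) (p y) (p x)" if "a \<le> x" "y \<le> e" for x y
    unfolding Sg_def by (simp only: sum_restrict[OF that])
  have L_eq: "(\<Sum>k\<in>{x<..<y}. hh p x y (p k) * aa k) = (\<Sum>k\<in>{a<..<e}. of_bool (x < k \<and> k < y) * (hh p x y (p k) * aa k))"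
    if "a \<le> x" "y \<le> e" for x y
    by (simp only: sum_restrict2[OF that])
  have tau_lin: "\<And>k. of_bool (a \<le> k \<and> k < b) * wab * tau (hh p a b) (p k) (p (Suc k))
     + of_bool (a \<le> k \<and> k < c) * wac * tau (hh p a c) (p k) (p (Suc k))
     + of_bool (a \<le> k \<and> k < e) * wae * tau (hh p a e) (p k) (p (Suc k))
     + of_bool (b \<le> k \<and> k < c) * wbc * tau (hh p b c) (p k) (p (Suc k))
     + of_bool (b \<le> k \<and> k < e) * wbe * tau (hh p b e) (p k) (p (Suc k))
     + of_bool (c \<le> k \<and> k < e) * wce * tau (hh p c e) (p k) (p (Suc k))
     = det3 (0,0) (p k) (p (Suc k)) * (G k (0,0) + G k (p k) + G k (p (Suc k)))"
    unfolding G_def tau_def by (simp add: algebra_simps)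
  have sum1: "(\<Sum>k\<in>{a..<e}. of_bool (a \<le> k \<and> k < b) * wab * tau (hh p a b) (p k) (p (Suc k))
     + of_bool (a \<le> k \<and> k < c) * wac * tau (hh p a c) (p k) (p (Suc k))
     + of_bool (a \<le> k \<and> k < e) * wae * tau (hh p a e) (p k) (p (Suc k))
     + of_bool (b \<le> k \<and> k < c) * wbc * tau (hh p b c) (p k) (p (Suc k))
     + of_bool (b \<le> k \<and> k < e) * wbe * tau (hh p b e) (p k) (p (Suc k))
     + of_bool (c \<le> k \<and> k < e) * wce * tau (hh p c e) (p k) (p (Suc k))) = 0"
    unfolding tau_lin by (rule sum.neutral) (simp add: G0)
  have sum2: "(\<Sum>k\<in>{a<..<e}. H k * aa k) = 0"
    by (rule sum.neutral) (simp add: H0)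
  have "wab * Phi p aa a b + wac * Phi p aa a c + wae * Phi p aa a e
        + wbc * Phi p aa b c + wbe * Phi p aa b e + wce * Phi p aa c e
      = (\<Sum>k\<in>{a..<e}. of_bool (a \<le> k \<and> k < b) * wab * tau (hh p a b) (p k) (p (Suc k))
     + of_bool (a \<le> k \<and> k < c) * wac * tau (hh p a c) (p k) (p (Suc k))
     + of_bool (a \<le> k \<and> k < e) * wae * tau (hh p a e) (p k) (p (Suc k))
     + of_bool (b \<le> k \<and> k < c) * wbc * tau (hh p b c) (p k) (p (Suc k))
     + of_bool (b \<le> k \<and> k < e) * wbe * tau (hh p b e) (p k) (p (Suc k))
     + of_bool (c \<le> k \<and> k < e) * wce * tau (hh p c e) (p k) (p (Suc k)))
     + (wab * tau (hh p a b) (p b) (p a) + wac * tau (hh p a c) (p c) (p a) + wae * tau (hh p a e) (p e) (p a)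
     + wbc * tau (hh p b c) (p c) (p b) + wbe * tau (hh p b e) (p e) (p b) + wce * tau (hh p c e) (p e) (p c))
     - (\<Sum>k\<in>{a<..<e}. H k * aa k)"
    unfolding Phi_def H_def
    using abce
    apply (simp only: Sg_eq L_eq less_imp_le order_refl)
    apply (simp add: sum.distrib sum_distrib_left algebra_simps del: sum_mult_of_bool_eq sum_of_bool_mult_eq)
    done
  then show ?thesis unfolding wdefs[symmetric] sum1 sum2 e4 by simp
qed

lemma dPhi_pair: "x < y \<Longrightarrow> y < n \<Longrightarrow> dPhi n p aa {x, y} = Phi p aa x y"
  unfolding dPhi_def by (simp add: segs_iff)

lemma Lq_dPhi: "Lq n p (dPhi n p aa)"
proof (rule Lq_sorted)
  fix a b c e assume *: "a < b" "b < c" "c < e" "e < n"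
  then show "Qx p (dPhi n p aa) a b c e = 1"
    unfolding Qx_def using quad_Phi[OF *, of aa] by (simp add: dPhi_pair)
qed

end


lemma consec_aux_i: "xingi u v k l \<Longrightarrow> cyci x u v \<Longrightarrow> \<not> xingi x u k l \<Longrightarrow> \<not> xingi x v k l
  \<Longrightarrow> (k = x \<longrightarrow> \<not> cyci u l v) \<Longrightarrow> (l = x \<longrightarrow> \<not> cyci u k v) \<Longrightarrow> False"
  unfolding xingi_def cyci_def by (smt (verit))

lemma cA: "cyci x u y \<Longrightarrow> cyci u s v \<Longrightarrow> cyci x y v \<Longrightarrow> cyci x s y \<Longrightarrow> cyci x u s"
  unfolding cyci_def by (smt (verit))
lemma cB: "cyci x u y \<Longrightarrow> cyci u s v \<Longrightarrow> cyci x y v \<Longrightarrow> cyci x y s \<Longrightarrow> cyci x s v"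
  unfolding cyci_def by (smt (verit))
lemma cC: "cyci x u y \<Longrightarrow> cyci x y v \<Longrightarrow> cyci x u v"
  unfolding cyci_def by (smt (verit))
lemma cD: "xingi u y k l \<Longrightarrow> cyci x u y \<Longrightarrow> cyci x y v \<Longrightarrow> \<not> xingi x u k l \<Longrightarrow> \<not> xingi x v k l
  \<Longrightarrow> (k = x \<longrightarrow> \<not> cyci u l v) \<Longrightarrow> (l = x \<longrightarrow> \<not> cyci u k v) \<Longrightarrow> xingi x y k l"
  unfolding xingi_def cyci_def by (smt (verit))
lemma cE: "xingi v y k l \<Longrightarrow> cyci x u y \<Longrightarrow> cyci x y v \<Longrightarrow> \<not> xingi x u k l \<Longrightarrow> \<not> xingi x v k l
  \<Longrightarrow> (k = x \<longrightarrow> \<not> cyci u l v) \<Longrightarrow> (l = x \<longrightarrow> \<not> cyci u k v) \<Longrightarrow> xingi x y k l"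
  unfolding xingi_def cyci_def by (smt (verit))

lemma off_eq: "x < n \<Longrightarrow> z < (n::nat) \<Longrightarrow> (z + n - x) mod n = (if x \<le> z then z - x else z + n - x)"
proof (cases "x \<le> z")
  case True
  assume "x < n" "z < n"
  then obtain d where d: "z = x + d" using True le_iff_add by blast
  then show ?thesis using True \<open>z < n\<close> by simp
next
  case False
  assume "x < n" "z < n"
  then show ?thesis using False by simp
qed

lemma cyc_off: "x < n \<Longrightarrow> a < n \<Longrightarrow> b < n \<Longrightarrow> a \<noteq> x \<Longrightarrow> b \<noteq> x \<Longrightarrow>
    cyc x a b \<longleftrightarrow> (a + n - x) mod n < (b + n - x) mod n"
  by (simp add: off_eq cyc_def) linarith

definition cnt :: "nat set set \<Rightarrow> nat set \<Rightarrow> nat" where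
  "cnt T s = card {t\<in>T. \<not> noncrossing s t}"

context
  fixes n :: nat and p :: "nat \<Rightarrow> real \<times> real" and T :: "nat set set"
  assumes cc: "convex_ccw n p" and tr: "convex_triangulation n T"
begin

lemma T_segs: "T \<subseteq> segs n" using tr unfolding convex_triangulation_def by blast

lemma finT: "finite T" using T_segs finite_segs finite_subset by blast

lemma T_mem: "{i, j} \<in> T \<Longrightarrow> i \<noteq> j \<and> i < n \<and> j < n"
  using T_segs segs_iff by blast

lemma hull: "i < n \<Longrightarrow> {i, Suc i mod n} \<in> T"
  using tr unfolding convex_triangulation_def by blast

lemma hull1: "Suc i < n \<Longrightarrow> {i, Suc i} \<in> T"
  using hull[of i] by simp

lemma hull0: "{0, n - 1} \<in> T"
proof -
  have "n \<ge> 3" using n3[OF cc] .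
  then have "Suc (n - 1) mod n = 0" by simp
  then show ?thesis using hull[of "n - 1"] \<open>n \<ge> 3\<close> by (simp add: insert_commute)
qed

lemma T_nx: "{i, j} \<in> T \<Longrightarrow> {k, l} \<in> T \<Longrightarrow> \<not> xing i j k l"
  using tr T_mem noncrossing_iff unfolding convex_triangulation_def by metis

lemma T_max: "{i, j} \<in> segs n \<Longrightarrow> {i, j} \<notin> T \<Longrightarrow> \<exists>k l. {k, l} \<in> T \<and> xing i j k l"
proof -
  assume s: "{i, j} \<in> segs n" "{i, j} \<notin> T"
  then obtain t where t: "t \<in> T" "\<not> noncrossing {i, j} t" using tr unfolding convex_triangulation_def by blast
  then obtain k l where "t = {k, l}" "k < l" using T_segs segsE by blast
  then show ?thesis using t s noncrossing_iff[of i j k l] segs_iff by auto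
qed

lemma consec:
  assumes "{x, u} \<in> T" "{x, v} \<in> T" "cyc x u v" "\<forall>s. {x, s} \<in> T \<longrightarrow> \<not> cyc u s v"
  shows "{u, v} \<in> T"
proof (rule ccontr)
  assume nu: "{u, v} \<notin> T"
  have "u < n" "v < n" using assms T_mem by auto
  moreover have "u \<noteq> v" using assms(3) cyc_dist by blast
  ultimately have "{u, v} \<in> segs n" using segs_iff by blast
  then obtain k l where kl: "{k, l} \<in> T" "xing u v k l" using T_max nu by blast
  have a1: "\<not> xing x u k l" "\<not> xing x v k l" using T_nx assms kl by auto
  have a2: "k = x \<longrightarrow> \<not> cyc u l v" using assms(4) kl(1) by blast
  have a3: "l = x \<longrightarrow> \<not> cyc u k v" using assms(4) kl(1) by (metis insert_commute)
  show False using consec_aux_i[of "int u" "int v" "int k" "int l" "int x"] kl(2) assms(3) a1 a2 a3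
    unfolding xing_int cyc_int by simp
qed

lemma nbr:
  assumes "x < n" "y < n" "x \<noteq> y" "{x, y} \<notin> T"
  shows "\<exists>u v. {x, u} \<in> T \<and> {x, v} \<in> T \<and> {u, v} \<in> T \<and> cyc x u y \<and> cyc x y v
     \<and> (\<forall>s. {x, s} \<in> T \<longrightarrow> \<not> cyc u s v)"
proof -
  define f where "f z = (z + n - x) mod n" for z
  define S1 where "S1 = {s. {x, s} \<in> T \<and> cyc x s y}"
  define S2 where "S2 = {s. {x, s} \<in> T \<and> cyc x y s}"
  have n3: "n \<ge> 3" using n3[OF cc] .
  have finS: "finite S1" "finite S2"
    by (rule finite_subset[of _ "{..<n}"], auto simp: S1_def S2_def dest: T_mem)+
  have x1: "Suc x mod n \<in> S1"
  proof -
    have h: "{x, Suc x mod n} \<in> T" using hull assms(1) by blast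
    then have ne: "y \<noteq> Suc x mod n" using assms(4) by auto
    have "cyc x (Suc x mod n) y"
    proof (cases "Suc x < n")
      case True then show ?thesis using ne assms unfolding cyc_def by auto
    next
      case False then have "x = n - 1" using assms by simp
      then show ?thesis using ne assms n3 unfolding cyc_def by auto
    qed
    then show ?thesis using h unfolding S1_def by blast
  qed
  have x0: "(x + n - 1) mod n \<in> S2"
  proof -
    have "Suc ((x + n - 1) mod n) mod n = x"
    proof (cases "x = 0")
      case True then show ?thesis using n3 by simp
    next
      case False
      then obtain y' where y': "x = Suc y'" using not0_implies_Suc by blast
      then show ?thesis using assms(1) by simp
    qed
    then have h: "{x, (x + n - 1) mod n} \<in> T" using hull[of "(x + n - 1) mod n"] n3
      by (simp add: insert_commute)
    then have ne: "y \<noteq> (x + n - 1) mod n" using assms(4) by auto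
    have "cyc x y ((x + n - 1) mod n)"
    proof (cases "x = 0")
      case True then show ?thesis using ne assms n3 unfolding cyc_def by auto
    next
      case False
      then obtain y' where y': "x = Suc y'" using not0_implies_Suc by blast
      then have "(x + n - 1) mod n = x - 1" using assms(1) by simp
      then show ?thesis using ne assms False unfolding cyc_def by auto
    qed
    then show ?thesis using h unfolding S2_def by blast
  qed
  obtain u where u: "u \<in> S1" "\<forall>s\<in>S1. f s \<le> f u"
  proof -
    have "Max (f ` S1) \<in> f ` S1" using finS x1 by (intro Max_in) auto
    then obtain u where "u \<in> S1" "f u = Max (f ` S1)" by auto
    moreover have "\<forall>s\<in>S1. f s \<le> Max (f ` S1)" using finS by auto
    ultimately show ?thesis using that by auto
  qed
  obtain v where v: "v \<in> S2" "\<forall>s\<in>S2. f v \<le> f s"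
  proof -
    have "Min (f ` S2) \<in> f ` S2" using finS x0 by (intro Min_in) auto
    then obtain v where "v \<in> S2" "f v = Min (f ` S2)" by auto
    moreover have "\<forall>s\<in>S2. Min (f ` S2) \<le> f s" using finS by auto
    ultimately show ?thesis using that by auto
  qed
  have xu: "{x, u} \<in> T" "cyc x u y" using u unfolding S1_def by auto
  have xv: "{x, v} \<in> T" "cyc x y v" using v unfolding S2_def by auto
  have un: "u < n" "u \<noteq> x" using xu T_mem by auto
  have vn: "v < n" "v \<noteq> x" using xv T_mem by auto
  have btw: "\<forall>s. {x, s} \<in> T \<longrightarrow> \<not> cyc u s v"
  proof (intro allI impI notI)
    fix s assume s: "{x, s} \<in> T" "cyc u s v"
    have sn: "s < n" "s \<noteq> x" using s T_mem by auto
    have sy: "s \<noteq> y" using s assms(4) by auto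
    have "cyc x s y \<or> cyc x y s" using cyc_distinct[of x s y] sn sy assms by auto
    then show False
    proof
      assume c: "cyc x s y"
      then have "s \<in> S1" using s unfolding S1_def by auto
      then have "f s \<le> f u" using u by auto
      moreover have "cyc x u s" using cA[of "int x" "int u" "int y" "int s" "int v"] xu xv s c
        unfolding cyc_int by simp
      then have "f u < f s" using cyc_off[of x n u s] assms un sn unfolding f_def by simp
      ultimately show False by simp
    next
      assume c: "cyc x y s"
      then have "s \<in> S2" using s unfolding S2_def by auto
      then have "f v \<le> f s" using v by auto
      moreover have "cyc x s v" using cB[of "int x" "int u" "int y" "int s" "int v"] xu xv s c
        unfolding cyc_int by simp
      then have "f s < f v" using cyc_off[of x n s v] assms vn sn unfolding f_def by simp
      ultimately show False by simp
    qed
  qed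
  have "cyc x u v" using cC[of "int x" "int u" "int y" "int v"] xu xv unfolding cyc_int by simp
  then have "{u, v} \<in> T" using consec xu xv btw by blast
  then show ?thesis using xu xv btw by blast
qed

lemma cnt_less:
  assumes "x < n" "y < n" "x \<noteq> y" "{x, u} \<in> T" "{x, v} \<in> T" "{u, v} \<in> T"
    "cyc x u y" "cyc x y v" "\<forall>s. {x, s} \<in> T \<longrightarrow> \<not> cyc u s v"
  shows "cnt T {u, y} < cnt T {x, y}" "cnt T {v, y} < cnt T {x, y}"
proof -
  have fin: "finite {t\<in>T. \<not> noncrossing {x, y} t}" using finT by simp
  have gen: "xing x y k l" if "{k, l} \<in> T" and X: "xing w y k l" and w: "w = u \<or> w = v" for k l w
  proof -
    have a1: "\<not> xing x u k l" "\<not> xing x v k l" using T_nx assms that by auto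
    have a2: "k = x \<longrightarrow> \<not> cyc u l v" using assms(9) that(1) by blast
    have a3: "l = x \<longrightarrow> \<not> cyc u k v" using assms(9) that(1) by (metis insert_commute)
    show ?thesis using w
    proof
      assume "w = u" then show ?thesis
        using cD[of "int u" "int y" "int k" "int l" "int x" "int v"] X assms(7,8) a1 a2 a3
        unfolding xing_int cyc_int by simp
    next
      assume "w = v" then show ?thesis
        using cE[of "int v" "int y" "int k" "int l" "int x" "int u"] X assms(7,8) a1 a2 a3
        unfolding xing_int cyc_int by simp
    qed
  qed
  have sub: "{t\<in>T. \<not> noncrossing {w, y} t} \<subset> {t\<in>T. \<not> noncrossing {x, y} t}" if w: "w = u \<or> w = v" "w \<noteq> y" for w
  proof
    show "{t\<in>T. \<not> noncrossing {w, y} t} \<subseteq> {t\<in>T. \<not> noncrossing {x, y} t}"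
    proof
      fix t assume t: "t \<in> {t\<in>T. \<not> noncrossing {w, y} t}"
      then obtain k l where kl: "t = {k, l}" "k < l" using T_segs segsE by blast
      then have "xing w y k l" using t noncrossing_iff[of w y k l] w by auto
      then have "xing x y k l" using gen kl t w by blast
      then show "t \<in> {t\<in>T. \<not> noncrossing {x, y} t}" using t kl noncrossing_iff[of x y k l] assms(3) by auto
    qed
  next
    have "xing x y u v" using assms(7,8) cyc_not cyc_dist unfolding xing_def by metis
    moreover have "\<not> xing w y u v" using w unfolding xing_def by auto
    moreover have "u \<noteq> v" using assms(7,8) cC[of "int x" "int u" "int y" "int v"] cyc_dist unfolding cyc_int by fastforce
    ultimately have "{u, v} \<in> {t\<in>T. \<not> noncrossing {x, y} t}" "{u, v} \<notin> {t\<in>T. \<not> noncrossing {w, y} t}"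
      using noncrossing_iff[of x y u v] noncrossing_iff[of w y u v] assms(3,6) w by auto
    then show "{t\<in>T. \<not> noncrossing {w, y} t} \<noteq> {t\<in>T. \<not> noncrossing {x, y} t}" by blast
  qed
  show "cnt T {u, y} < cnt T {x, y}" unfolding cnt_def
    using psubset_card_mono[OF fin sub[of u]] assms(7) cyc_dist by blast
  show "cnt T {v, y} < cnt T {x, y}" unfolding cnt_def
    using psubset_card_mono[OF fin sub[of v]] assms(8) cyc_dist by blast
qed

lemma pair_induct:
  assumes step: "\<And>x y. x < n \<Longrightarrow> y < n \<Longrightarrow> x \<noteq> y \<Longrightarrow>
     (\<And>x' y'. x' < n \<Longrightarrow> y' < n \<Longrightarrow> x' \<noteq> y' \<Longrightarrow> cnt T {x', y'} < cnt T {x, y} \<Longrightarrow> P x' y') \<Longrightarrow> P x y"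
  shows "x < n \<Longrightarrow> y < n \<Longrightarrow> x \<noteq> y \<Longrightarrow> P x y"
proof (induction "cnt T {x, y}" arbitrary: x y rule: less_induct)
  case less
  then show ?case using step by blast
qed

end




definition PL :: "(nat \<Rightarrow> nat \<Rightarrow> real) \<Rightarrow> nat list \<Rightarrow> real" where
  "PL f xs = (\<Sum>l<length xs - 1. f (xs ! l) (xs ! Suc l))"

lemma PL_short: "length xs \<le> 1 \<Longrightarrow> PL f xs = 0"
  unfolding PL_def by simp

lemma PL_Cons2: "PL f (x # y # zs) = f x y + PL f (y # zs)"
  unfolding PL_def by (simp add: sum.lessThan_Suc_shift del: sum.lessThan_Suc)

lemma PL_append: "xs \<noteq> [] \<Longrightarrow> ys \<noteq> [] \<Longrightarrow> PL f (xs @ ys) = PL f xs + f (last xs) (hd ys) + PL f ys"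
proof (induction xs)
  case Nil then show ?case by simp
next
  case (Cons x xs)
  show ?case
  proof (cases xs)
    case Nil
    then obtain y ys' where "ys = y # ys'" using Cons.prems by (cases ys) auto
    then show ?thesis using Nil by (simp add: PL_Cons2 PL_short)
  next
    case (Cons x' xs')
    then have "PL f ((x # xs) @ ys) = f x x' + PL f (xs @ ys)" by (simp add: PL_Cons2)
    also have "\<dots> = f x x' + (PL f xs + f (last xs) (hd ys) + PL f ys)"
      using Cons.IH Cons.prems Cons by simp
    finally show ?thesis using Cons by (simp add: PL_Cons2)
  qed
qed

definition PS :: "(nat \<Rightarrow> nat \<Rightarrow> real) \<Rightarrow> nat set \<Rightarrow> real" where
  "PS f K = PL f (sorted_list_of_set K)"

lemma PS_small: "finite K \<Longrightarrow> K \<subseteq> {c} \<Longrightarrow> PS f K = 0"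
proof -
  assume "finite K" "K \<subseteq> {c}"
  then have "card K \<le> 1" using card_mono[of "{c}" K] by simp
  then show "PS f K = 0" unfolding PS_def by (simp add: PL_short)
qed

lemma last_sorted_list_of_set:
  assumes "finite K" "K \<noteq> {}"
  shows "last (sorted_list_of_set K) = Max K"
proof -
  let ?L = "sorted_list_of_set K"
  have ne: "?L \<noteq> []" using assms by simp
  have s: "sorted ?L" by simp
  have e: "butlast ?L @ [last ?L] = ?L" using ne by (rule append_butlast_last_id)
  have "sorted (butlast ?L @ [last ?L])" using s e by simp
  then have b: "\<forall>x\<in>set (butlast ?L). x \<le> last ?L" by (simp add: sorted_append)
  have "set ?L = set (butlast ?L @ [last ?L])" using e by simp
  then have "set ?L = insert (last ?L) (set (butlast ?L))" by simp
  then have "\<forall>x\<in>set ?L. x \<le> last ?L" using b by auto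
  moreover have "last ?L \<in> K" using ne assms by (metis last_in_set set_sorted_list_of_set)
  ultimately show ?thesis using assms by (intro Max_eqI[symmetric]) auto
qed

lemma hd_sorted_list_of_set:
  assumes "finite K" "K \<noteq> {}"
  shows "hd (sorted_list_of_set K) = Min K"
  using sorted_list_of_set_nonempty[OF assms] by simp

lemma PS_union:
  assumes "finite K1" "finite K2" "K1 \<noteq> {}" "K2 \<noteq> {}" "\<forall>a\<in>K1. \<forall>b\<in>K2. a < b"
  shows "PS f (K1 \<union> K2) = PS f K1 + f (Max K1) (Min K2) + PS f K2"
proof -
  let ?L1 = "sorted_list_of_set K1" and ?L2 = "sorted_list_of_set K2"
  have "sorted_list_of_set (K1 \<union> K2) = ?L1 @ ?L2"
  proof (rule sorted_distinct_set_unique)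
    show "sorted (?L1 @ ?L2)" using assms by (simp add: sorted_append less_imp_le)
    show "distinct (?L1 @ ?L2)" using assms by auto
    show "set (sorted_list_of_set (K1 \<union> K2)) = set (?L1 @ ?L2)" using assms by simp
  qed simp_all
  moreover have "?L1 \<noteq> []" "?L2 \<noteq> []" using assms by simp_all
  ultimately show ?thesis unfolding PS_def
    using PL_append last_sorted_list_of_set[OF assms(1,3)] hd_sorted_list_of_set[OF assms(2,4)] by simp
qed

definition FF :: "nat \<Rightarrow> (nat \<Rightarrow> real \<times> real) \<Rightarrow> nat \<Rightarrow> nat \<Rightarrow> nat \<Rightarrow> real" where
  "FF n p i a b = det3 (p i) (p ((i + a) mod n)) (p ((i + b) mod n))"

definition Off :: "nat \<Rightarrow> nat set set \<Rightarrow> nat \<Rightarrow> nat set" where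
  "Off n T i = {k. 0 < k \<and> k < n \<and> {i, (i + k) mod n} \<in> T}"

definition Aint :: "nat \<Rightarrow> (nat \<Rightarrow> real \<times> real) \<Rightarrow> nat set set \<Rightarrow> nat \<Rightarrow> nat \<Rightarrow> nat \<Rightarrow> real" where
  "Aint n p T i j k = PS (FF n p k) {q \<in> Off n T k. (k + q) mod n \<in> {i..j}}"

lemma AreaT_PS: "AreaT n p T k = PS (FF n p k) (Off n T k)"
  unfolding AreaT_def PS_def PL_def FF_def Off_def nbr_offsets_def by (simp add: Let_def)

lemma idx_eq: "(k::nat) < n \<Longrightarrow> q < n \<Longrightarrow> (k + q) mod n = (if k + q < n then k + q else k + q - n)"
proof -
  assume a: "k < n" "q < n"
  show ?thesis
  proof (cases "k + q < n")
    case False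
    then obtain d where d: "k + q = n + d" using le_iff_add[of n "k + q"] by auto
    then have "d < n" using a by simp
    then show ?thesis using False d by simp
  qed simp
qed

lemma finite_Off: "finite (Off n T k)"
  unfolding Off_def by (rule finite_subset[of _ "{..<n}"]) auto

context
  fixes n :: nat and p :: "nat \<Rightarrow> real \<times> real" and T :: "nat set set"
  assumes cc: "convex_ccw n p" and tr: "convex_triangulation n T"
begin

lemma nbr_inside:
  assumes "{i, m} \<in> T" "i < k" "k < m" "{k, l} \<in> T"
  shows "i \<le> l \<and> l \<le> m"
proof (rule ccontr)
  assume "\<not> (i \<le> l \<and> l \<le> m)"
  moreover have "k \<noteq> l" using T_mem[OF cc tr] assms(4) by blast
  ultimately have "xing i m k l" using assms(2,3) unfolding xing_def cyc_def by auto
  then show False using T_nx[OF cc tr] assms(1,4) by blast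
qed

lemma tri_exists:
  assumes "{i, j} \<in> T" "Suc i < j"
  shows "\<exists>m. i < m \<and> m < j \<and> {i, m} \<in> T \<and> {m, j} \<in> T"
proof -
  have jn: "j < n" using T_mem[OF cc tr] assms(1) by blast
  define S where "S = {s. {i, s} \<in> T \<and> i < s \<and> s < j}"
  have fin: "finite S" unfolding S_def by (rule finite_subset[of _ "{..<j}"]) auto
  have "Suc i \<in> S" unfolding S_def using hull1[OF cc tr] assms jn by auto
  then have ne: "S \<noteq> {}" by blast
  define m where "m = Max S"
  have mS: "m \<in> S" unfolding m_def using fin ne by (rule Max_in)
  have mmax: "\<forall>s\<in>S. s \<le> m" unfolding m_def using fin by simp
  have "{m, j} \<in> T"
  proof (rule consec[OF cc tr])
    show "{i, m} \<in> T" using mS unfolding S_def by blast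
    show "{i, j} \<in> T" by (rule assms(1))
    show "cyc i m j" using mS unfolding S_def cyc_def by auto
    show "\<forall>s. {i, s} \<in> T \<longrightarrow> \<not> cyc m s j"
    proof (intro allI impI notI)
      fix s assume "{i, s} \<in> T" "cyc m s j"
      moreover have "i < m" "m < j" using mS unfolding S_def by auto
      ultimately have "s \<in> S" "m < s" unfolding S_def cyc_def by auto
      then show False using mmax by auto
    qed
  qed
  then show ?thesis using mS unfolding S_def by blast
qed

lemma Off_idx:
  assumes "k < n" "q \<in> Off n T k"
  shows "{k, (k + q) mod n} \<in> T" "0 < q" "q < n"
  using assms unfolding Off_def by auto

lemma Aint_adj:
  assumes "Suc i < n" "k \<in> {i..Suc i}"
  shows "Aint n p T i (Suc i) k = 0"
proof -
  have kn: "k < n" using assms by auto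
  have "{q \<in> Off n T k. (k + q) mod n \<in> {i..Suc i}} \<subseteq> {if k = i then 1 else n - 1}"
  proof
    fix q assume q: "q \<in> {q \<in> Off n T k. (k + q) mod n \<in> {i..Suc i}}"
    then have q1: "0 < q" "q < n" unfolding Off_def by auto
    show "q \<in> {if k = i then 1 else n - 1}"
      using q q1 assms idx_eq[OF kn q1(2)] by (cases "k = i"; cases "k + q < n"; simp; linarith)
  qed
  then show ?thesis unfolding Aint_def by (rule PS_small[rotated]) (simp add: finite_Off)
qed

lemma Aint_inner:
  assumes "{i, j} \<in> T" "i < k" "k < j"
  shows "Aint n p T i j k = AreaT n p T k"
proof -
  have kn: "k < n" using assms T_mem[OF cc tr, of i j] by auto
  have "(k + q) mod n \<in> {i..j}" if "q \<in> Off n T k" for q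
  proof -
    have "{k, (k + q) mod n} \<in> T" using Off_idx(1)[OF kn that] .
    then show ?thesis using nbr_inside[OF assms] by simp
  qed
  then have "{q \<in> Off n T k. (k + q) mod n \<in> {i..j}} = Off n T k" by blast
  then show ?thesis unfolding Aint_def AreaT_PS by simp
qed

lemma Aint_full:
  assumes "k < n"
  shows "Aint n p T 0 (n - 1) k = AreaT n p T k"
proof -
  have "{q \<in> Off n T k. (k + q) mod n \<in> {0..n - 1}} = Off n T k"
  proof -
    have "(k + q) mod n \<le> n - 1" for q
    proof -
      have "(k + q) mod n < n" using n3[OF cc] by simp
      then show ?thesis by linarith
    qed
    then show ?thesis by auto
  qed
  then show ?thesis unfolding Aint_def AreaT_PS by simp
qed

end


lemma sumA1:
  fixes F :: "nat \<Rightarrow> real"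
  assumes "i \<le> m" "m \<le> j"
  shows "(\<Sum>k\<in>{i..j}. of_bool (k \<le> m) * F k) = (\<Sum>k\<in>{i..m}. F k)"
proof -
  have "{k\<in>{i..j}. k \<le> m} = {i..m}" using assms by auto
  moreover have "(\<Sum>k\<in>{i..j}. of_bool (k \<le> m) * F k) = (\<Sum>k\<in>{i..j}. if k \<le> m then F k else 0)"
    by (rule sum.cong) auto
  ultimately show ?thesis using sum.inter_filter[of "{i..j}" F "\<lambda>k. k \<le> m"] by simp
qed

lemma sumA2:
  fixes F :: "nat \<Rightarrow> real"
  assumes "i \<le> m" "m \<le> j"
  shows "(\<Sum>k\<in>{i..j}. of_bool (m \<le> k) * F k) = (\<Sum>k\<in>{m..j}. F k)"
proof -
  have "{k\<in>{i..j}. m \<le> k} = {m..j}" using assms by auto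
  moreover have "(\<Sum>k\<in>{i..j}. of_bool (m \<le> k) * F k) = (\<Sum>k\<in>{i..j}. if m \<le> k then F k else 0)"
    by (rule sum.cong) auto
  ultimately show ?thesis using sum.inter_filter[of "{i..j}" F "\<lambda>k. m \<le> k"] by simp
qed

lemma sumA3:
  fixes F :: "nat \<Rightarrow> real"
  assumes "x \<in> {i..j}"
  shows "(\<Sum>k\<in>{i..j}. of_bool (k = x) * F k) = F x"
proof -
  have "(\<Sum>k\<in>{i..j}. of_bool (k = x) * F k) = (\<Sum>k\<in>{i..j}. if k = x then F k else 0)"
    by (rule sum.cong) auto
  then show ?thesis using assms by (simp add: sum.delta)
qed

context
  fixes n :: nat and p :: "nat \<Rightarrow> real \<times> real" and T :: "nat set set"
  assumes cc: "convex_ccw n p" and tr: "convex_triangulation n T"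
begin

lemma Aint_at_i:
  assumes "i < m" "m < j" "{i, m} \<in> T" "{m, j} \<in> T" "{i, j} \<in> T"
  shows "Aint n p T i j i = Aint n p T i m i + det3 (p i) (p m) (p j)"
proof -
  have jn: "j < n" using T_mem[OF cc tr, of i j] assms by auto
  have iN: "i < n" using jn assms by simp
  define K1 where "K1 = {q \<in> Off n T i. (i + q) mod n \<in> {i..m}}"
  have lin: "(i + q) mod n = i + q" if "q \<in> Off n T i" "(i + q) mod n \<ge> i" for q
    using that idx_eq[OF iN, of q] Off_idx[OF cc tr iN that(1)] by (auto split: if_splits)
  have K1le: "a \<le> m - i" if "a \<in> K1" for a
    using that lin[of a] unfolding K1_def by auto
  have mK1: "m - i \<in> K1" unfolding K1_def Off_def using assms jn by auto
  have KK: "{q \<in> Off n T i. (i + q) mod n \<in> {i..j}} = K1 \<union> {j - i}"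
  proof (rule set_eqI, rule iffI)
    fix q assume q: "q \<in> {q \<in> Off n T i. (i + q) mod n \<in> {i..j}}"
    then have qO: "q \<in> Off n T i" and l: "(i + q) mod n \<in> {i..j}" by auto
    then have l2: "(i + q) mod n = i + q" using lin by auto
    have e: "{i, i + q} \<in> T" using Off_idx(1)[OF cc tr iN qO] l2 by simp
    have "\<not> (m < i + q \<and> i + q < j)"
    proof
      assume "m < i + q \<and> i + q < j"
      then have "xing m j i (i + q)" using assms unfolding xing_def cyc_def by auto
      then show False using T_nx[OF cc tr] assms(4) e by blast
    qed
    then show "q \<in> K1 \<union> {j - i}" using l l2 qO unfolding K1_def by auto
  next
    fix q assume "q \<in> K1 \<union> {j - i}"
    then show "q \<in> {q \<in> Off n T i. (i + q) mod n \<in> {i..j}}"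
      unfolding K1_def Off_def using assms jn by auto
  qed
  have "PS (FF n p i) (K1 \<union> {j - i}) = PS (FF n p i) K1 + FF n p i (Max K1) (Min {j - i}) + PS (FF n p i) {j - i}"
  proof (rule PS_union)
    show "finite K1" unfolding K1_def using finite_Off by simp
    show "K1 \<noteq> {}" using mK1 by blast
    show "\<forall>a\<in>K1. \<forall>b\<in>{j - i}. a < b" using K1le assms by fastforce
  qed simp_all
  moreover have "Max K1 = m - i"
  proof (rule Max_eqI)
    show "finite K1" unfolding K1_def using finite_Off by simp
  qed (use mK1 K1le in auto)
  moreover have "PS (FF n p i) {j - i} = 0" by (rule PS_small) auto
  ultimately show ?thesis unfolding Aint_def K1_def[symmetric] KK
    using assms jn by (simp add: FF_def)
qed

lemma Aint_at_j:
  assumes "i < m" "m < j" "{i, m} \<in> T" "{m, j} \<in> T" "{i, j} \<in> T"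
  shows "Aint n p T i j j = Aint n p T m j j + det3 (p i) (p m) (p j)"
proof -
  have jn: "j < n" using T_mem[OF cc tr, of i j] assms by auto
  define K2 where "K2 = {q \<in> Off n T j. (j + q) mod n \<in> {m..j}}"
  have wr: "\<not> j + q < n \<and> (j + q) mod n = j + q - n" if "q \<in> Off n T j" "(j + q) mod n \<le> j" for q
    using that idx_eq[OF jn, of q] Off_idx[OF cc tr jn that(1)] by (auto split: if_splits)
  have K2ge: "n - j + m \<le> a" if "a \<in> K2" for a
  proof -
    have A: "a \<in> Off n T j" "(j + a) mod n \<in> {m..j}" using that unfolding K2_def by auto
    then have "\<not> j + a < n" "(j + a) mod n = j + a - n" using wr[OF A(1)] by auto
    then show ?thesis using A(2) jn by simp arith
  qed
  have mK2: "n - j + m \<in> K2"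
  proof -
    have "(j + (n - j + m)) mod n = m" using jn assms by simp
    then show ?thesis unfolding K2_def Off_def using assms jn by (auto simp: insert_commute)
  qed
  have iK: "(j + (n - j + i)) mod n = i" using jn assms by simp
  have KK: "{q \<in> Off n T j. (j + q) mod n \<in> {i..j}} = {n - j + i} \<union> K2"
  proof (rule set_eqI, rule iffI)
    fix q assume q: "q \<in> {q \<in> Off n T j. (j + q) mod n \<in> {i..j}}"
    then have qO: "q \<in> Off n T j" and l: "(j + q) mod n \<in> {i..j}" by auto
    then have l2: "\<not> j + q < n" "(j + q) mod n = j + q - n" using wr by auto
    have e: "{j, j + q - n} \<in> T" using Off_idx(1)[OF cc tr jn qO] l2 by simp
    have qn: "q < n" using qO unfolding Off_def by auto
    have "\<not> (i < j + q - n \<and> j + q - n < m)"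
    proof
      assume "i < j + q - n \<and> j + q - n < m"
      then have "xing i m j (j + q - n)" using assms unfolding xing_def cyc_def by auto
      then show False using T_nx[OF cc tr] assms(3) e by blast
    qed
    moreover have "(j + q) mod n = i \<Longrightarrow> q = n - j + i" using l2 jn by arith
    ultimately show "q \<in> {n - j + i} \<union> K2" using l l2 qO qn unfolding K2_def by auto
  next
    fix q assume "q \<in> {n - j + i} \<union> K2"
    then show "q \<in> {q \<in> Off n T j. (j + q) mod n \<in> {i..j}}"
      unfolding K2_def Off_def using assms jn iK by (auto simp: insert_commute)
  qed
  have "PS (FF n p j) ({n - j + i} \<union> K2) = PS (FF n p j) {n - j + i} + FF n p j (Max {n - j + i}) (Min K2) + PS (FF n p j) K2"
  proof (rule PS_union)
    show "finite K2" unfolding K2_def using finite_Off by simp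
    show "K2 \<noteq> {}" using mK2 by blast
    show "\<forall>a\<in>{n - j + i}. \<forall>b\<in>K2. a < b" using K2ge assms jn by fastforce
  qed simp_all
  moreover have "Min K2 = n - j + m"
  proof (rule Min_eqI)
    show "finite K2" unfolding K2_def using finite_Off by simp
  qed (use mK2 K2ge in auto)
  moreover have "PS (FF n p j) {n - j + i} = 0" by (rule PS_small) auto
  moreover have "FF n p j (n - j + i) (n - j + m) = det3 (p i) (p m) (p j)"
  proof -
    have "(j + (n - j + m)) mod n = m" using jn assms by simp
    then show ?thesis unfolding FF_def using iK det3_cyc[of "p i" "p m" "p j"] det3_cyc[of "p m" "p j" "p i"] by simp
  qed
  ultimately show ?thesis unfolding Aint_def K2_def[symmetric] KK by simp
qed

lemma Aint_at_m:
  assumes "i < m" "m < j" "{i, m} \<in> T" "{m, j} \<in> T" "{i, j} \<in> T"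
  shows "Aint n p T i j m = Aint n p T m j m + Aint n p T i m m + det3 (p i) (p m) (p j)"
proof -
  have jn: "j < n" using T_mem[OF cc tr, of i j] assms by auto
  have mn: "m < n" using jn assms by simp
  define K1 where "K1 = {q \<in> Off n T m. (m + q) mod n \<in> {m..j}}"
  define K2 where "K2 = {q \<in> Off n T m. (m + q) mod n \<in> {i..m}}"
  have KK: "{q \<in> Off n T m. (m + q) mod n \<in> {i..j}} = K1 \<union> K2"
    unfolding K1_def K2_def using assms by auto
  have c1: "a \<le> j - m" if "a \<in> K1" for a
    using that idx_eq[OF mn, of a] Off_idx[OF cc tr mn, of a] unfolding K1_def by (auto split: if_splits)
  have c2: "n - m + i \<le> b" if "b \<in> K2" for b
  proof -
    have A: "b \<in> Off n T m" "(m + b) mod n \<in> {i..m}" using that unfolding K2_def by auto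
    have "b < n" "0 < b" using Off_idx[OF cc tr mn A(1)] by simp_all
    then have "\<not> m + b < n" "(m + b) mod n = m + b - n" using A(2) idx_eq[OF mn, of b] by (auto split: if_splits)
    then show ?thesis using A(2) mn by simp arith
  qed
  have jK1: "j - m \<in> K1" unfolding K1_def Off_def using assms jn by auto
  have iK: "(m + (n - m + i)) mod n = i" using mn assms by simp
  have iK2: "n - m + i \<in> K2" unfolding K2_def Off_def using assms mn iK by (auto simp: insert_commute)
  have "PS (FF n p m) (K1 \<union> K2) = PS (FF n p m) K1 + FF n p m (Max K1) (Min K2) + PS (FF n p m) K2"
  proof (rule PS_union)
    show "finite K1" unfolding K1_def using finite_Off by simp
    show "finite K2" unfolding K2_def using finite_Off by simp
    show "K1 \<noteq> {}" using jK1 by blast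
    show "K2 \<noteq> {}" using iK2 by blast
    show "\<forall>a\<in>K1. \<forall>b\<in>K2. a < b"
    proof (intro ballI)
      fix a b assume "a \<in> K1" "b \<in> K2"
      then have "a \<le> j - m" "n - m + i \<le> b" using c1 c2 by auto
      then show "a < b" using assms jn by linarith
    qed
  qed
  moreover have "Max K1 = j - m"
  proof (rule Max_eqI)
    show "finite K1" unfolding K1_def using finite_Off by simp
  qed (use jK1 c1 in auto)
  moreover have "Min K2 = n - m + i"
  proof (rule Min_eqI)
    show "finite K2" unfolding K2_def using finite_Off by simp
  qed (use iK2 c2 in auto)
  moreover have "FF n p m (j - m) (n - m + i) = det3 (p i) (p m) (p j)"
    unfolding FF_def using iK assms jn det3_cyc[of "p i" "p m" "p j"] det3_cyc[of "p m" "p j" "p i"] by simp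
  ultimately show ?thesis unfolding Aint_def K1_def[symmetric] K2_def[symmetric] KK by simp
qed

lemma Aint_decomp:
  assumes "i < m" "m < j" "{i, m} \<in> T" "{m, j} \<in> T" "{i, j} \<in> T"
  shows "(\<Sum>k\<in>{i..j}. g (p k) * Aint n p T i j k) = (\<Sum>k\<in>{i..m}. g (p k) * Aint n p T i m k)
      + (\<Sum>k\<in>{m..j}. g (p k) * Aint n p T m j k) + det3 (p i) (p m) (p j) * (g (p i) + g (p m) + g (p j))"
proof -
  define D where "D = det3 (p i) (p m) (p j)"
  have pt: "g (p k) * Aint n p T i j k = of_bool (k \<le> m) * (g (p k) * Aint n p T i m k)
     + of_bool (m \<le> k) * (g (p k) * Aint n p T m j k)
     + (of_bool (k = i) * (D * g (p k)) + of_bool (k = m) * (D * g (p k)) + of_bool (k = j) * (D * g (p k)))"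
    if k: "k \<in> {i..j}" for k
  proof -
    consider "k = i" | "i < k \<and> k < m" | "k = m" | "m < k \<and> k < j" | "k = j" using k assms by fastforce
    then show ?thesis
    proof cases
      case 1 then show ?thesis using assms Aint_at_i[OF assms] unfolding D_def by (simp add: algebra_simps)
    next
      case 2 then show ?thesis using assms Aint_inner[OF cc tr, of i j k] Aint_inner[OF cc tr, of i m k] by simp
    next
      case 3 then show ?thesis using assms Aint_at_m[OF assms] unfolding D_def by (simp add: algebra_simps)
    next
      case 4 then show ?thesis using assms Aint_inner[OF cc tr, of i j k] Aint_inner[OF cc tr, of m j k] by simp
    next
      case 5 then show ?thesis using assms Aint_at_j[OF assms] unfolding D_def by (simp add: algebra_simps)
    qed
  qed
  have "(\<Sum>k\<in>{i..j}. g (p k) * Aint n p T i j k) =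
     (\<Sum>k\<in>{i..j}. of_bool (k \<le> m) * (g (p k) * Aint n p T i m k))
     + (\<Sum>k\<in>{i..j}. of_bool (m \<le> k) * (g (p k) * Aint n p T m j k))
     + ((\<Sum>k\<in>{i..j}. of_bool (k = i) * (D * g (p k))) + (\<Sum>k\<in>{i..j}. of_bool (k = m) * (D * g (p k)))
        + (\<Sum>k\<in>{i..j}. of_bool (k = j) * (D * g (p k))))"
    using pt by (simp add: sum.distrib del: sum_mult_of_bool_eq sum_of_bool_mult_eq)
  also have "\<dots> = (\<Sum>k\<in>{i..m}. g (p k) * Aint n p T i m k) + (\<Sum>k\<in>{m..j}. g (p k) * Aint n p T m j k)
      + (D * g (p i) + D * g (p m) + D * g (p j))"
    using assms by (simp only: sumA1 sumA2 sumA3 less_imp_le atLeastAtMost_iff order_refl)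
  finally show ?thesis unfolding D_def by (simp add: algebra_simps)
qed

lemma KEY:
  assumes "{i, j} \<in> T" "i < j" "aff2 g"
  shows "(\<Sum>k\<in>{i..j}. g (p k) * Aint n p T i j k) = Sg p g i j"
  using assms(1,2)
proof (induction "j - i" arbitrary: i j rule: less_induct)
  case less
  have jn: "j < n" using T_mem[OF cc tr, of i j] less.prems by auto
  show ?case
  proof (cases "j = Suc i")
    case True
    have "(\<Sum>k\<in>{i..j}. g (p k) * Aint n p T i j k) = 0"
      using Aint_adj[OF cc tr, of i] True jn by simp
    then show ?thesis using True Sg_adj by simp
  next
    case False
    then have "Suc i < j" using less.prems by simp
    then obtain m where m: "i < m" "m < j" "{i, m} \<in> T" "{m, j} \<in> T" using tri_exists[OF cc tr less.prems(1)] by blast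
    have IH1: "(\<Sum>k\<in>{i..m}. g (p k) * Aint n p T i m k) = Sg p g i m" using less.hyps[of m i] m by simp
    have IH2: "(\<Sum>k\<in>{m..j}. g (p k) * Aint n p T m j k) = Sg p g m j" using less.hyps[of j m] m by simp
    show ?thesis unfolding Aint_decomp[OF m(1,2,3,4) less.prems(1)] IH1 IH2
      using Sg_split[of i m j g p] m assms(3) by simp
  qed
qed

lemma KEY_full:
  assumes "aff2 g"
  shows "(\<Sum>k<n. g (p k) * area_vec n p T k) = Sg p g 0 (n - 1)"
proof -
  have n3: "n \<ge> 3" using n3[OF cc] .
  have "{..<n} = {0..n - 1}" using n3 by auto
  then have "(\<Sum>k<n. g (p k) * area_vec n p T k) = (\<Sum>k\<in>{0..n - 1}. g (p k) * Aint n p T 0 (n - 1) k)"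
    using Aint_full[OF cc tr] unfolding area_vec_def by (intro sum.cong) auto
  also have "\<dots> = Sg p g 0 (n - 1)" using KEY[OF hull0[OF cc tr] _ assms] n3 by simp
  finally show ?thesis .
qed

lemma Phi_zero:
  assumes "{i, j} \<in> T" "i < j"
  shows "Phi p (area_vec n p T) i j = 0"
proof -
  have jn: "j < n" using T_mem[OF cc tr, of i j] assms by auto
  have K: "(\<Sum>k\<in>{i..j}. hh p i j (p k) * Aint n p T i j k) = Sg p (hh p i j) i j"
    using KEY[OF assms aff2_hh] .
  have "{i..j} = insert i (insert j {i<..<j})" using assms by auto
  then have "(\<Sum>k\<in>{i..j}. hh p i j (p k) * Aint n p T i j k) = (\<Sum>k\<in>{i<..<j}. hh p i j (p k) * Aint n p T i j k)"
    using assms by (simp add: hh_def det3_same)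
  also have "\<dots> = (\<Sum>k\<in>{i<..<j}. hh p i j (p k) * area_vec n p T k)"
    using Aint_inner[OF cc tr assms(1)] jn unfolding area_vec_def by (intro sum.cong) auto
  finally show ?thesis unfolding Phi_def using K by simp
qed

end


lemma cF: "cyci x u y \<Longrightarrow> cyci x y v \<Longrightarrow> cyci y x u \<and> cyci y v u \<and> cyci y v x"
  unfolding cyci_def by (smt (verit))

definition dT :: "nat \<Rightarrow> (nat \<Rightarrow> real \<times> real) \<Rightarrow> nat set set \<Rightarrow> nat set \<Rightarrow> real" where
  "dT n p T = dPhi n p (area_vec n p T)"

context
  fixes n :: nat and p :: "nat \<Rightarrow> real \<times> real" and T :: "nat set set"
  assumes cc: "convex_ccw n p" and tr: "convex_triangulation n T"
begin

lemma wsign: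
  assumes "x < n" "y < n" "u < n" "v < n" "cyc x u y" "cyc x y v"
  shows "wgt p x y u v < 0" "wgt p y u x v > 0" "wgt p y v x u > 0"
proof -
  have c: "cyc y x u" "cyc y v u" "cyc y v x" using cF[of "int x" "int u" "int y" "int v"] assms(5,6)
    unfolding cyc_int by auto
  have d1: "det3 (p x) (p y) (p u) < 0" using det_neg[OF cc] assms by blast
  have d2: "det3 (p x) (p y) (p v) > 0" using det_pos[OF cc] assms by blast
  have d3: "det3 (p y) (p u) (p x) < 0" using det_neg[OF cc] assms c by blast
  have d4: "det3 (p y) (p u) (p v) < 0" using det_neg[OF cc] assms c by blast
  have d5: "det3 (p y) (p v) (p x) > 0" using det_pos[OF cc] assms c by blast
  have d6: "det3 (p y) (p v) (p u) > 0" using det_pos[OF cc] assms c by blast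
  show "wgt p x y u v < 0" unfolding wgt_def using mult_neg_pos[OF d1 d2] by simp
  show "wgt p y u x v > 0" unfolding wgt_def using mult_neg_neg[OF d3 d4] by simp
  show "wgt p y v x u > 0" unfolding wgt_def using mult_pos_pos[OF d5 d6] by simp
qed

lemma rec_eq:
  assumes L: "Lq n p d" and Z: "\<forall>s\<in>T. d s = 0" and xy: "x < n" "y < n" "x \<noteq> y"
    and e: "{x, u} \<in> T" "{x, v} \<in> T" "{u, v} \<in> T" and c: "cyc x u y" "cyc x y v"
  shows "wgt p x y u v * d {x, y} + wgt p y u x v * d {y, u} + wgt p y v x u * d {y, v} = 1"
proof -
  have uv: "u < n" "v < n" using e T_mem[OF cc tr] by blast+
  have "u \<noteq> v" using cC[of "int x" "int u" "int y" "int v"] c cyc_dist unfolding cyc_int by fastforce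
  then have "distinct [x, y, u, v]" using c cyc_dist xy by auto
  then have "Qx p d x y u v = 1" using L xy uv unfolding Lq_def by blast
  then show ?thesis unfolding Qx_def using Z e by simp
qed

lemma Tzero_unique:
  assumes L1: "Lq n p d" and Z1: "\<forall>s\<in>T. d s = 0" and L2: "Lq n p d'" and Z2: "\<forall>s\<in>T. d' s = 0"
  shows "x < n \<Longrightarrow> y < n \<Longrightarrow> x \<noteq> y \<Longrightarrow> d {x, y} = d' {x, y}"
proof (rule pair_induct[OF cc tr, where P = "\<lambda>x y. d {x, y} = d' {x, y}"])
  fix x y assume xy: "x < n" "y < n" "x \<noteq> y"
    and IH: "\<And>x' y'. x' < n \<Longrightarrow> y' < n \<Longrightarrow> x' \<noteq> y' \<Longrightarrow> cnt T {x', y'} < cnt T {x, y} \<Longrightarrow> d {x', y'} = d' {x', y'}"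
  show "d {x, y} = d' {x, y}"
  proof (cases "{x, y} \<in> T")
    case True then show ?thesis using Z1 Z2 by simp
  next
    case False
    then obtain u v where uv: "{x, u} \<in> T" "{x, v} \<in> T" "{u, v} \<in> T" "cyc x u y" "cyc x y v"
      "\<forall>s. {x, s} \<in> T \<longrightarrow> \<not> cyc u s v" using nbr[OF cc tr xy] by blast
    have un: "u < n" "v < n" using uv T_mem[OF cc tr] by blast+
    have lt: "cnt T {u, y} < cnt T {x, y}" "cnt T {v, y} < cnt T {x, y}"
      using cnt_less[OF cc tr xy uv(1,2,3,4,5,6)] by auto
    have "d {u, y} = d' {u, y}" using IH[OF un(1) xy(2) _ lt(1)] uv(4) cyc_dist by blast
    then have e1: "wgt p y u x v * d {u, y} = wgt p y u x v * d' {u, y}" by simp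
    have "d {v, y} = d' {v, y}" using IH[OF un(2) xy(2) _ lt(2)] uv(5) cyc_dist by blast
    then have e2: "wgt p y v x u * d {v, y} = wgt p y v x u * d' {v, y}" by simp
    have w: "wgt p x y u v < 0" using wsign[OF xy(1,2) un uv(4,5)] by simp
    have r1: "wgt p x y u v * d {x, y} + wgt p y u x v * d {u, y} + wgt p y v x u * d {v, y} = 1"
      using rec_eq[OF L1 Z1 xy uv(1,2,3,4,5)] by (simp add: insert_commute)
    have r2: "wgt p x y u v * d' {x, y} + wgt p y u x v * d' {u, y} + wgt p y v x u * d' {v, y} = 1"
      using rec_eq[OF L2 Z2 xy uv(1,2,3,4,5)] by (simp add: insert_commute)
    have "wgt p x y u v * d {x, y} = wgt p x y u v * d' {x, y}" using r1 r2 e1 e2 by linarith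
    then show ?thesis using w by simp
  qed
qed

lemma Tzero_nonpos:
  assumes L1: "Lq n p d" and Z1: "\<forall>s\<in>T. d s = 0"
  shows "x < n \<Longrightarrow> y < n \<Longrightarrow> x \<noteq> y \<Longrightarrow> d {x, y} \<le> 0"
proof (rule pair_induct[OF cc tr, where P = "\<lambda>x y. d {x, y} \<le> 0"])
  fix x y assume xy: "x < n" "y < n" "x \<noteq> y"
    and IH: "\<And>x' y'. x' < n \<Longrightarrow> y' < n \<Longrightarrow> x' \<noteq> y' \<Longrightarrow> cnt T {x', y'} < cnt T {x, y} \<Longrightarrow> d {x', y'} \<le> 0"
  show "d {x, y} \<le> 0"
  proof (cases "{x, y} \<in> T")
    case True then show ?thesis using Z1 by simp
  next
    case False
    then obtain u v where uv: "{x, u} \<in> T" "{x, v} \<in> T" "{u, v} \<in> T" "cyc x u y" "cyc x y v"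
      "\<forall>s. {x, s} \<in> T \<longrightarrow> \<not> cyc u s v" using nbr[OF cc tr xy] by blast
    have un: "u < n" "v < n" using uv T_mem[OF cc tr] by blast+
    have lt: "cnt T {u, y} < cnt T {x, y}" "cnt T {v, y} < cnt T {x, y}"
      using cnt_less[OF cc tr xy uv(1,2,3,4,5,6)] by auto
    have a1: "d {y, u} \<le> 0" using IH[OF un(1) xy(2) _ lt(1)] uv(4) cyc_dist by (metis insert_commute)
    have a2: "d {y, v} \<le> 0" using IH[OF un(2) xy(2) _ lt(2)] uv(5) cyc_dist by (metis insert_commute)
    have w: "wgt p x y u v < 0" "wgt p y u x v > 0" "wgt p y v x u > 0" using wsign[OF xy(1,2) un uv(4,5)] by auto
    have r: "wgt p x y u v * d {x, y} + wgt p y u x v * d {y, u} + wgt p y v x u * d {y, v} = 1"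
      using rec_eq[OF L1 Z1 xy uv(1,2,3,4,5)] .
    have "wgt p y u x v * d {y, u} \<le> 0" using w a1 by (simp add: mult_nonneg_nonpos)
    moreover have "wgt p y v x u * d {y, v} \<le> 0" using w a2 by (simp add: mult_nonneg_nonpos)
    ultimately have "wgt p x y u v * d {x, y} \<ge> 1" using r by linarith
    then show ?thesis using w(1) by (metis less_le_not_le mult_neg_pos not_one_le_zero order.trans zero_less_one_class.zero_le_one linorder_not_le)
  qed
qed

lemma dT_zero: "s \<in> T \<Longrightarrow> dT n p T s = 0"
proof -
  assume s: "s \<in> T"
  then obtain i j where ij: "s = {i, j}" "i < j" "j < n" using T_segs[OF cc tr] segsE by blast
  then show "dT n p T s = 0" unfolding dT_def using dPhi_pair[OF cc ij(2,3)] Phi_zero[OF cc tr, of i j] s by simp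
qed

lemma dT_Yset: "dT n p T \<in> Yset n p"
  unfolding Yset_iff
proof (intro conjI ballI allI impI)
  show "dT n p T s = 0" if "s \<notin> segs n" for s using that unfolding dT_def dPhi_def by simp
  show "Lq n p (dT n p T)" unfolding dT_def by (rule Lq_dPhi[OF cc])
  show "dT n p T s \<le> 0" if s: "s \<in> segs n" for s
  proof -
    obtain i j where ij: "s = {i, j}" "i < j" "j < n" using s segsE by blast
    show ?thesis unfolding ij(1)
      by (rule Tzero_nonpos) (use Lq_dPhi[OF cc] dT_zero ij in \<open>auto simp: dT_def\<close>)
  qed
qed

lemma dT_Yface: "dT n p T \<in> Yface n p"
  unfolding Yface_def using dT_Yset dT_zero hull[OF cc tr] by blast

end


lemma amap_at:
  "i < n \<Longrightarrow> amap n p d i = - d {(i + n - 1) mod n, Suc i mod n} / det3 (p ((i + n - 1) mod n)) (p i) (p (Suc i mod n))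
     + det3 (p ((i + n - 1) mod n)) (p i) (p (Suc i mod n))"
  unfolding amap_def by (simp add: Let_def)

lemma amap_out: "\<not> i < n \<Longrightarrow> amap n p d i = 0"
  unfolding amap_def by simp

context
  fixes n :: nat and p :: "nat \<Rightarrow> real \<times> real" and T :: "nat set set"
  assumes cc: "convex_ccw n p" and tr: "convex_triangulation n T"
begin

lemma amap_dT: "amap n p (dT n p T) = area_vec n p T"
proof
  fix i
  have n3: "n \<ge> 3" using n3[OF cc] .
  define a where "a = area_vec n p T"
  show "amap n p (dT n p T) i = area_vec n p T i"
  proof (cases "i < n")
    case False then show ?thesis unfolding area_vec_def by (simp add: amap_out)
  next
    case iN: True
    define D where "D = det3 (p ((i + n - 1) mod n)) (p i) (p (Suc i mod n))"
    have Dpos: "D > 0"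
    proof -
      have "cyc ((i + n - 1) mod n) i (Suc i mod n)"
      proof (cases "i = 0")
        case True then show ?thesis using n3 unfolding cyc_def by simp
      next
        case False
        then obtain i' where i': "i = Suc i'" using not0_implies_Suc by blast
        show ?thesis
        proof (cases "Suc i < n")
          case True then show ?thesis using i' unfolding cyc_def by simp
        next
          case False then have "Suc i = n" using iN by simp
          then show ?thesis using i' n3 unfolding cyc_def by simp
        qed
      qed
      then show ?thesis unfolding D_def by (rule det_pos[OF cc, rotated 3]) (use iN in simp_all)
    qed
    have key: "dT n p T {(i + n - 1) mod n, Suc i mod n} = D^2 - D * a i"
    proof -
      consider "i = 0" | "0 < i \<and> Suc i < n" | "Suc i = n" using iN by linarith
      then show ?thesis
      proof cases
        case 1
        have pr: "{(i + n - 1) mod n, Suc i mod n} = {1, n - 1}" using 1 n3 by auto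
        define h where "h = hh p 1 (n - 1)"
        have KF: "(\<Sum>k<n. h (p k) * a k) = Sg p h 0 (n - 1)" unfolding h_def a_def
          by (rule KEY_full[OF cc tr aff2_hh])
        have ls: "{..<n} = insert 0 (insert 1 (insert (n - 1) {1<..<n - 1}))" using n3 by auto
        have h1: "h (p 1) = 0" "h (p (n - 1)) = 0" unfolding h_def hh_def by (simp_all add: det3_same)
        have A: "(\<Sum>k<n. h (p k) * a k) = h (p 0) * a 0 + (\<Sum>k\<in>{1<..<n - 1}. h (p k) * a k)"
          unfolding ls using n3 h1 by simp
        have B: "Sg p h 0 (n - 1) = Sg p h 1 (n - 1) + det3 (p 0) (p 1) (p (n - 1)) * h (p 0)"
          using Sg_split[of 0 1 "n - 1" h p] n3 h1 Sg_adj[of p h 0] unfolding h_def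
          by (simp add: aff2_hh)
        have Dq: "D = det3 (p 0) (p 1) (p (n - 1))" unfolding D_def using 1 n3
          det3_cyc[of "p (n - 1)" "p 0" "p 1"] by simp
        have h0: "h (p 0) = - D"
        proof -
          have "h (p 0) = det3 (p 1) (p 0) (p (n - 1))" unfolding h_def hh_def ..
          also have "\<dots> = - det3 (p 0) (p 1) (p (n - 1))" by (rule det3_swap1)
          finally show ?thesis using Dq by simp
        qed
        have B': "Sg p h 0 (n - 1) = Sg p h 1 (n - 1) + D * h (p 0)" using B Dq by simp
        have X: "Sg p h 1 (n - 1) - (\<Sum>k\<in>{1<..<n - 1}. h (p k) * a k) = - D * h (p 0) + h (p 0) * a 0"
          using A B' KF by linarith
        have "Phi p a 1 (n - 1) = Sg p h 1 (n - 1) - (\<Sum>k\<in>{1<..<n - 1}. h (p k) * a k)"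
          unfolding Phi_def h_def ..
        also have "\<dots> = D^2 - D * a 0" unfolding X \<open>h (p 0) = - D\<close> by (simp add: power2_eq_square)
        finally have "Phi p a 1 (n - 1) = D^2 - D * a 0" .
        then show ?thesis unfolding pr dT_def a_def[symmetric] using dPhi_pair[OF cc, of 1 "n - 1"] n3 1 by simp
      next
        case 2
        then obtain i' where i': "i = Suc i'" using not0_implies_Suc by blast
        have pr: "{(i + n - 1) mod n, Suc i mod n} = {i', Suc (Suc i')}" using i' 2 by auto
        have "D = det3 (p i') (p (Suc i')) (p (Suc (Suc i')))" unfolding D_def using i' 2 by simp
        then show ?thesis unfolding pr dT_def a_def using dPhi_pair[OF cc, of i' "Suc (Suc i')"] 2 i'
            Phi_special[of p _ i'] by simp
      next
        case 3
        obtain k where k: "n = Suc (Suc (Suc k))" using n3 by (intro that[of "n - 3"]) simp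
        have ii: "i = Suc (Suc k)" using 3 k by simp
        have m1: "(i + n - 1) mod n = Suc k"
        proof -
          have e1: "i + n - 1 = Suc k + n" using k ii by simp
          have "Suc k < n" using k by simp
          then show ?thesis unfolding e1 by (simp only: mod_add_self2 mod_less)
        qed
        have m2: "Suc i mod n = 0" using 3 by simp
        have n1: "n - 1 = Suc (Suc k)" "n - 2 = Suc k" using k by simp_all
        have pr: "{(i + n - 1) mod n, Suc i mod n} = {0, Suc k}" unfolding m1 m2 by auto
        define h where "h = hh p 0 (Suc k)"
        have KF: "(\<Sum>q<n. h (p q) * a q) = Sg p h 0 (Suc (Suc k))" unfolding h_def a_def
          using KEY_full[OF cc tr aff2_hh] n1 by simp
        have ls: "{..<n} = insert 0 (insert (Suc k) (insert (Suc (Suc k)) {0<..<Suc k}))" using k by auto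
        have h1: "h (p 0) = 0" "h (p (Suc k)) = 0" unfolding h_def hh_def by (simp_all add: det3_same)
        have A: "(\<Sum>q<n. h (p q) * a q) = h (p (Suc (Suc k))) * a (Suc (Suc k)) + (\<Sum>q\<in>{0<..<Suc k}. h (p q) * a q)"
          unfolding ls using h1 by simp
        have B: "Sg p h 0 (Suc (Suc k)) = Sg p h 0 (Suc k) + det3 (p 0) (p (Suc k)) (p (Suc (Suc k))) * h (p (Suc (Suc k)))"
          using Sg_split[of 0 "Suc k" "Suc (Suc k)" h p] h1 Sg_adj[of p h "Suc k"] unfolding h_def
          by (simp add: aff2_hh)
        have Dq: "D = det3 (p 0) (p (Suc k)) (p (Suc (Suc k)))" unfolding D_def m1 m2
          using det3_cyc[of "p 0" "p (Suc k)" "p (Suc (Suc k))"] ii by simp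
        have h2: "h (p (Suc (Suc k))) = - D"
        proof -
          have "h (p (Suc (Suc k))) = det3 (p 0) (p (Suc (Suc k))) (p (Suc k))" unfolding h_def hh_def ..
          also have "\<dots> = - det3 (p 0) (p (Suc k)) (p (Suc (Suc k)))" by (rule det3_swap)
          finally show ?thesis using Dq by simp
        qed
        have B': "Sg p h 0 (Suc (Suc k)) = Sg p h 0 (Suc k) + D * h (p (Suc (Suc k)))" using B Dq by simp
        have X: "Sg p h 0 (Suc k) - (\<Sum>q\<in>{0<..<Suc k}. h (p q) * a q) = - D * h (p (Suc (Suc k))) + h (p (Suc (Suc k))) * a (Suc (Suc k))"
          using A B' KF by linarith
        have "Phi p a 0 (Suc k) = Sg p h 0 (Suc k) - (\<Sum>q\<in>{0<..<Suc k}. h (p q) * a q)"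
          unfolding Phi_def h_def ..
        also have "\<dots> = D^2 - D * a i" unfolding X h2 ii by (simp add: power2_eq_square)
        finally have "Phi p a 0 (Suc k) = D^2 - D * a i" .
        then show ?thesis unfolding pr dT_def a_def[symmetric] using dPhi_pair[OF cc, of 0 "Suc k"] k by simp
      qed
    qed
    show ?thesis using Dpos iN unfolding amap_at[OF iN] D_def[symmetric] key a_def
      by (simp add: power2_eq_square field_simps)
  qed
qed

theorem part1:
  assumes "d \<in> Yset n p" "\<forall>e\<in>T. d e = 0"
  shows "amap n p d = area_vec n p T"
proof -
  have L: "Lq n p d" using assms(1) unfolding Yset_iff by blast
  have LT: "Lq n p (dT n p T)" using dT_Yset[OF cc tr] unfolding Yset_iff by blast
  have ZT: "\<forall>s\<in>T. dT n p T s = 0" using dT_zero[OF cc tr] by blast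
  have eq: "d {x, y} = dT n p T {x, y}" if "x < n" "y < n" "x \<noteq> y" for x y
    using Tzero_unique[OF cc tr L assms(2) LT ZT that] .
  have n3: "n \<ge> 3" using n3[OF cc] .
  have "amap n p d = amap n p (dT n p T)"
  proof
    fix i show "amap n p d i = amap n p (dT n p T) i"
    proof (cases "i < n")
      case True
      have "(i + n - 1) mod n \<noteq> Suc i mod n"
      proof (cases "Suc i < n")
        case True
        show ?thesis
        proof (cases i)
          case 0
          have "(i + n - 1) mod n = n - 1" using 0 n3 by simp
          moreover have "Suc i mod n = 1" using 0 n3 by simp
          ultimately show ?thesis using n3 by simp
        next
          case (Suc i')
          have "i + n - 1 = i' + n" using Suc by simp
          then have "(i + n - 1) mod n = i'" using Suc \<open>i < n\<close> by simp
          moreover have "Suc i mod n = Suc i" using True by simp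
          ultimately show ?thesis using Suc by simp
        qed
      next
        case False then have e: "Suc i = n" using \<open>i < n\<close> by simp
        obtain k where k: "n = Suc (Suc (Suc k))" using n3 by (intro that[of "n - 3"]) simp
        have e1: "i + n - 1 = Suc k + n" using k e by simp
        have "Suc k < n" using k by simp
        then have "(i + n - 1) mod n = Suc k" unfolding e1 by (simp only: mod_add_self2 mod_less)
        then show ?thesis using e by simp
      qed
      then show ?thesis using eq[of "(i + n - 1) mod n" "Suc i mod n"] True n3 by (simp add: amap_at)
    qed (simp add: amap_out)
  qed
  then show ?thesis using amap_dT by simp
qed

end


lemma Qx_lin: "Qx p (\<lambda>s. \<alpha> * d s + \<beta> * d' s) a b c e = \<alpha> * Qx p d a b c e + \<beta> * Qx p d' a b c e"
  unfolding Qx_def by (simp add: algebra_simps)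

lemma Qx_sum: "Qx p (\<lambda>s. \<Sum>l<m. c l * D l s) a b cc e = (\<Sum>l<m. c l * Qx p (D l) a b cc e)"
  unfolding Qx_def by (simp add: algebra_simps sum.distrib sum_distrib_left)

lemma amap_comb: "amap n p (\<lambda>s. lam * x s + (1 - lam) * y s) = (\<lambda>i. lam * amap n p x i + (1 - lam) * amap n p y i)"
proof
  fix i
  show "amap n p (\<lambda>s. lam * x s + (1 - lam) * y s) i = lam * amap n p x i + (1 - lam) * amap n p y i"
  proof (cases "i < n")
    case True
    define D where "D = det3 (p ((i + n - 1) mod n)) (p i) (p (Suc i mod n))"
    define X where "X = x {(i + n - 1) mod n, Suc i mod n}"
    define Y where "Y = y {(i + n - 1) mod n, Suc i mod n}"
    have "- (lam * X + (1 - lam) * Y) / D + D = lam * (- X / D + D) + (1 - lam) * (- Y / D + D)"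
      by (cases "D = 0") (simp_all add: field_simps)
    then show ?thesis using True unfolding amap_def Let_def D_def X_def Y_def by simp
  qed (simp add: amap_def)
qed

context
  fixes n :: nat and p :: "nat \<Rightarrow> real \<times> real"
  assumes cc: "convex_ccw n p"
begin

lemma Yface_hull: "d \<in> Yface n p \<Longrightarrow> Suc i < n \<Longrightarrow> d {i, Suc i} = 0"
proof -
  assume d: "d \<in> Yface n p" and i: "Suc i < n"
  have H: "\<forall>k<n. d {k, Suc k mod n} = 0" using d unfolding Yface_def by blast
  have "i < n" using i by simp
  then have "d {i, Suc i mod n} = 0" using H by blast
  then show ?thesis using i by simp
qed

lemma Yface_hull0: "d \<in> Yface n p \<Longrightarrow> d {0, n - 1} = 0"
proof -
  assume d: "d \<in> Yface n p"
  have n3: "n \<ge> 3" using n3[OF cc] .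
  then have m: "Suc (n - 1) mod n = 0" by simp
  have H: "\<forall>k<n. d {k, Suc k mod n} = 0" using d unfolding Yface_def by blast
  have "n - 1 < n" using n3 by simp
  then have "d {n - 1, Suc (n - 1) mod n} = 0" using H by blast
  then show ?thesis unfolding m by (simp add: insert_commute)
qed

lemma R3:
  assumes d: "d \<in> Yface n p"
  shows "i < j \<Longrightarrow> j < n \<Longrightarrow> Suc i < j \<Longrightarrow> d {i, j} = Phi p (amap n p d) i j"
proof (induction "j - i" arbitrary: i j rule: less_induct)
  case less
  define a where "a = amap n p d"
  have L: "Lq n p d" using d unfolding Yface_def Yset_iff by blast
  show ?case
  proof (cases "j = Suc (Suc i)")
    case True
    define D where "D = det3 (p i) (p (Suc i)) (p (Suc (Suc i)))"
    have Dp: "D > 0" unfolding D_def using det_pos[OF cc] less.prems True unfolding cyc_def by simp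
    have m1: "(Suc i + n - 1) mod n = i" using less.prems by simp
    have m2: "Suc (Suc i) mod n = Suc (Suc i)" using less.prems True by simp
    have "a (Suc i) = - d {i, Suc (Suc i)} / D + D"
      unfolding a_def D_def using amap_at[of "Suc i" n p d] less.prems True m1 m2 by simp
    then have "d {i, Suc (Suc i)} = D^2 - D * a (Suc i)" using Dp by (simp add: field_simps power2_eq_square)
    then show ?thesis unfolding True a_def[symmetric] Phi_special D_def by simp
  next
    case False
    then have ij: "Suc (Suc i) < j" using less.prems by simp
    define dd where "dd = dPhi n p a"
    have L2: "Lq n p dd" unfolding dd_def by (rule Lq_dPhi[OF cc])
    have dist: "distinct [i, Suc i, j - 1, j]" using ij by auto
    have q1: "Qx p d i (Suc i) (j - 1) j = 1" using L dist less.prems unfolding Lq_def by auto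
    have q2: "Qx p dd i (Suc i) (j - 1) j = 1" using L2 dist less.prems unfolding Lq_def by auto
    have ddp: "dd {x, y} = Phi p a x y" if "x < y" "y < n" for x y
      unfolding dd_def using dPhi_pair[OF cc that] .
    have e1: "d {i, Suc i} = dd {i, Suc i}" using Yface_hull[OF d, of i] ddp[of i "Suc i"] Phi_adj less.prems by simp
    have e2: "d {j - 1, j} = dd {j - 1, j}"
    proof -
      have "Suc (j - 1) = j" using ij by simp
      then show ?thesis using Yface_hull[OF d, of "j - 1"] ddp[of "j - 1" j] Phi_adj[of p a "j - 1"] less.prems by simp
    qed
    have e3: "d {i, j - 1} = dd {i, j - 1}" using less.hyps[of "j - 1" i] ddp[of i "j - 1"] ij less.prems a_def by simp
    have e4: "d {Suc i, j} = dd {Suc i, j}" using less.hyps[of j "Suc i"] ddp[of "Suc i" j] ij less.prems a_def by simp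
    have e5: "d {Suc i, j - 1} = dd {Suc i, j - 1}"
    proof (cases "Suc (Suc i) < j - 1")
      case True then show ?thesis using less.hyps[of "j - 1" "Suc i"] ddp[of "Suc i" "j - 1"] ij less.prems a_def by simp
    next
      case False then have "j - 1 = Suc (Suc i)" using ij by simp
      then show ?thesis using Yface_hull[OF d, of "Suc i"] ddp[of "Suc i" "j - 1"] Phi_adj less.prems by simp
    qed
    have w: "wgt p i j (Suc i) (j - 1) \<noteq> 0"
    proof -
      have "det3 (p i) (p j) (p (Suc i)) \<noteq> 0" "det3 (p i) (p j) (p (j - 1)) \<noteq> 0"
        using det_nz[OF cc] dist less.prems by auto
      then show ?thesis unfolding wgt_def by simp
    qed
    have Q1: "Qx p d i (Suc i) (j - 1) j = wgt p i (Suc i) (j - 1) j * d {i, Suc i} + wgt p i (j - 1) (Suc i) j * d {i, j - 1}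
       + wgt p i j (Suc i) (j - 1) * d {i, j} + wgt p (Suc i) (j - 1) i j * d {Suc i, j - 1}
       + wgt p (Suc i) j i (j - 1) * d {Suc i, j} + wgt p (j - 1) j i (Suc i) * d {j - 1, j}"
      unfolding Qx_def ..
    have Q2: "Qx p dd i (Suc i) (j - 1) j = wgt p i (Suc i) (j - 1) j * dd {i, Suc i} + wgt p i (j - 1) (Suc i) j * dd {i, j - 1}
       + wgt p i j (Suc i) (j - 1) * dd {i, j} + wgt p (Suc i) (j - 1) i j * dd {Suc i, j - 1}
       + wgt p (Suc i) j i (j - 1) * dd {Suc i, j} + wgt p (j - 1) j i (Suc i) * dd {j - 1, j}"
      unfolding Qx_def ..
    have "wgt p i j (Suc i) (j - 1) * d {i, j} = wgt p i j (Suc i) (j - 1) * dd {i, j}"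
      using q1 q2 unfolding Q1 Q2 e1 e2 e3 e4 e5 by linarith
    then have "d {i, j} = dd {i, j}" using w by simp
    then show ?thesis using ddp[of i j] less.prems a_def by simp
  qed
qed

lemma zeros_nc:
  assumes d: "d \<in> Yset n p" and s: "s \<in> segs n" "d s = 0" and t: "t \<in> segs n" "d t = 0"
  shows "noncrossing s t"
proof (rule ccontr)
  assume "\<not> noncrossing s t"
  then have "crossing s t \<or> crossing t s" unfolding noncrossing_def by blast
  then obtain a b c e where X: "{a, b} \<in> segs n" "{c, e} \<in> segs n" "d {a, b} = 0" "d {c, e} = 0" "a < c" "c < b" "b < e"
    using s t unfolding crossing_def by metis
  have en: "e < n" using X(2) segs_iff by blast
  have L: "Lq n p d" using d unfolding Yset_iff by blast
  have np: "\<forall>s\<in>segs n. d s \<le> 0" using d unfolding Yset_iff by blast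
  have dist: "distinct [a, c, b, e]" using X by auto
  have q: "Qx p d a c b e = 1" using L dist X en unfolding Lq_def by auto
  have pos: "det3 (p x) (p y) (p z) > 0" if "cyc x y z" "x < n" "y < n" "z < n" for x y z
    using det_pos[OF cc] that by blast
  have neg: "det3 (p x) (p y) (p z) < 0" if "cyc x z y" "x < n" "y < n" "z < n" for x y z
    using det_neg[OF cc] that by blast
  have w1: "wgt p a c b e > 0" unfolding wgt_def using pos[of a c b] pos[of a c e] X en
    unfolding cyc_def by (simp add: mult_pos_pos)
  have w2: "wgt p a e c b > 0"
  proof -
    have "det3 (p a) (p e) (p c) < 0" by (rule neg) (use X en in \<open>auto simp: cyc_def\<close>)
    moreover have "det3 (p a) (p e) (p b) < 0" by (rule neg) (use X en in \<open>auto simp: cyc_def\<close>)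
    ultimately show ?thesis unfolding wgt_def by (simp add: mult_neg_neg)
  qed
  have w3: "wgt p c b a e > 0" unfolding wgt_def using pos[of c b a] pos[of c b e] X en
    unfolding cyc_def by (simp add: mult_pos_pos)
  have w4: "wgt p b e a c > 0" unfolding wgt_def using pos[of b e a] pos[of b e c] X en
    unfolding cyc_def by (simp add: mult_pos_pos)
  have sg: "{a, c} \<in> segs n" "{a, e} \<in> segs n" "{c, b} \<in> segs n" "{b, e} \<in> segs n"
    using X en segs_iff by auto
  have t1: "wgt p a c b e * d {a, c} \<le> 0" using w1 np sg by (simp add: mult_nonneg_nonpos)
  have t2: "wgt p a e c b * d {a, e} \<le> 0" using w2 np sg by (simp add: mult_nonneg_nonpos)
  have t3: "wgt p c b a e * d {c, b} \<le> 0" using w3 np sg by (simp add: mult_nonneg_nonpos)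
  have t4: "wgt p b e a c * d {b, e} \<le> 0" using w4 np sg by (simp add: mult_nonneg_nonpos)
  have "Qx p d a c b e = wgt p a c b e * d {a, c} + wgt p a e c b * d {a, e} + wgt p c b a e * d {c, b}
      + wgt p b e a c * d {b, e}"
    unfolding Qx_def using X by (simp add: insert_commute)
  then show False using q t1 t2 t3 t4 by linarith
qed

end

lemma extend_tri:
  assumes "Z \<subseteq> segs n" "\<forall>s\<in>Z. \<forall>t\<in>Z. noncrossing s t" "\<forall>i<n. {i, Suc i mod n} \<in> Z"
  shows "\<exists>T. convex_triangulation n T \<and> Z \<subseteq> T"
proof -
  define F where "F = {T. Z \<subseteq> T \<and> T \<subseteq> segs n \<and> (\<forall>s\<in>T. \<forall>t\<in>T. noncrossing s t)}"
  have finF: "finite F" unfolding F_def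
    by (rule finite_subset[of _ "Pow (segs n)"]) (auto simp: finite_segs)
  have ZF: "Z \<in> F" unfolding F_def using assms by blast
  define M where "M = Max (card ` F)"
  have "M \<in> card ` F" unfolding M_def using finF ZF by (intro Max_in) auto
  then obtain T where T: "T \<in> F" "card T = M" by auto
  have Tmax: "card T' \<le> card T" if "T' \<in> F" for T'
    using that finF T(2) unfolding M_def by auto
  have TF: "Z \<subseteq> T" "T \<subseteq> segs n" "\<forall>s\<in>T. \<forall>t\<in>T. noncrossing s t" using T(1) unfolding F_def by auto
  have finT: "finite T" using TF(2) finite_segs finite_subset by blast
  have "convex_triangulation n T" unfolding convex_triangulation_def
  proof (intro conjI ballI allI impI)
    show "T \<subseteq> segs n" by (rule TF(2))
    show "{i, Suc i mod n} \<in> T" if "i < n" for i using assms(3) TF(1) that by blast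
    show "noncrossing s t" if "s \<in> T" "t \<in> T" for s t using TF(3) that by blast
    show "\<exists>t\<in>T. \<not> noncrossing s t" if s: "s \<in> segs n" "s \<notin> T" for s
    proof (rule ccontr)
      assume "\<not> (\<exists>t\<in>T. \<not> noncrossing s t)"
      then have nc: "\<forall>t\<in>T. noncrossing s t" by blast
      have "insert s T \<in> F" unfolding F_def using TF nc noncrossing_self[OF s(1)] noncrossing_sym s(1) by auto
      then have "card (insert s T) \<le> card T" using Tmax by blast
      then show False using finT s(2) by simp
    qed
  qed
  then show ?thesis using TF(1) by blast
qed

lemma cvx_sum_split:
  fixes f :: "nat \<Rightarrow> real"
  shows "(\<Sum>l<m1 + m2. f l) = (\<Sum>l<m1. f l) + (\<Sum>l<m2. f (m1 + l))"
  by (induction m2) simp_all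

lemma cvx_E:
  assumes x: "x \<in> cvx_comb_hull S"
  obtains m :: nat and c v where "\<forall>l<m. 0 \<le> c l \<and> v l \<in> S" "(\<Sum>l<m. c l) = 1" "x = (\<lambda>j. \<Sum>l<m. c l * v l j)"
proof -
  from x have "\<exists>(m::nat) c v. (\<forall>l<m. 0 \<le> c l \<and> v l \<in> S) \<and> (\<Sum>l<m. c l) = 1 \<and> x = (\<lambda>j. \<Sum>l<m. c l * v l j)"
    unfolding cvx_comb_hull_def by (simp only: mem_Collect_eq)
  then show ?thesis
  proof (elim exE conjE)
    fix m :: nat and c v assume a: "\<forall>l<m. 0 \<le> c l \<and> v l \<in> S" "(\<Sum>l<m. c l) = 1" "x = (\<lambda>j. \<Sum>l<m. c l * v l j)"
    show thesis by (rule that[OF a])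
  qed
qed

lemma cvx_I:
  fixes m :: nat
  assumes "\<forall>l<m. 0 \<le> c l \<and> v l \<in> S" "(\<Sum>l<m. c l) = 1" "x = (\<lambda>j. \<Sum>l<m. c l * v l j)"
  shows "x \<in> cvx_comb_hull S"
  unfolding cvx_comb_hull_def mem_Collect_eq
  apply (rule exI[of _ m], rule exI[of _ c], rule exI[of _ v])
  using assms by blast

lemma cvx_bin:
  assumes x: "x \<in> cvx_comb_hull S" and y: "y \<in> cvx_comb_hull S" and l: "0 \<le> lam" "lam \<le> 1"
  shows "(\<lambda>j. lam * x j + (1 - lam) * y j) \<in> cvx_comb_hull S"
proof -
  obtain m1 :: nat and c1 v1 where 1: "\<forall>l<m1. 0 \<le> c1 l \<and> v1 l \<in> S" "(\<Sum>l<m1. c1 l) = 1" "x = (\<lambda>j. \<Sum>l<m1. c1 l * v1 l j)"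
    using x by (rule cvx_E)
  obtain m2 :: nat and c2 v2 where 2: "\<forall>l<m2. 0 \<le> c2 l \<and> v2 l \<in> S" "(\<Sum>l<m2. c2 l) = 1" "y = (\<lambda>j. \<Sum>l<m2. c2 l * v2 l j)"
    using y by (rule cvx_E)
  define c where "c l = (if l < m1 then lam * c1 l else (1 - lam) * c2 (l - m1))" for l
  define v where "v l = (if l < m1 then v1 l else v2 (l - m1))" for l
  have a: "\<forall>l<m1 + m2. 0 \<le> c l \<and> v l \<in> S"
  proof (intro allI impI)
    fix l assume "l < m1 + m2"
    then show "0 \<le> c l \<and> v l \<in> S" unfolding c_def v_def using 1(1) 2(1) l
      by (cases "l < m1") auto
  qed
  have s1: "(\<Sum>l<m1. c l * w l) = lam * (\<Sum>l<m1. c1 l * w l)" for w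
  proof -
    have "(\<Sum>l<m1. c l * w l) = (\<Sum>l<m1. lam * (c1 l * w l))" by (rule sum.cong) (auto simp: c_def)
    then show ?thesis by (simp add: sum_distrib_left)
  qed
  have s2: "(\<Sum>l<m2. c (m1 + l) * w (m1 + l)) = (1 - lam) * (\<Sum>l<m2. c2 l * w (m1 + l))" for w
  proof -
    have "(\<Sum>l<m2. c (m1 + l) * w (m1 + l)) = (\<Sum>l<m2. (1 - lam) * (c2 l * w (m1 + l)))"
      by (rule sum.cong) (auto simp: c_def)
    then show ?thesis by (simp add: sum_distrib_left)
  qed
  have b: "(\<Sum>l<m1 + m2. c l) = 1"
    using s1[of "\<lambda>_. 1"] s2[of "\<lambda>_. 1"] 1(2) 2(2) unfolding cvx_sum_split by simp
  have e: "(\<lambda>j. lam * x j + (1 - lam) * y j) = (\<lambda>j. \<Sum>l<m1 + m2. c l * v l j)"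
  proof
    fix j
    have v1: "(\<Sum>l<m1. c l * v l j) = (\<Sum>l<m1. c l * v1 l j)" by (rule sum.cong) (auto simp: v_def)
    have v2: "(\<Sum>l<m2. c (m1 + l) * v (m1 + l) j) = (\<Sum>l<m2. c (m1 + l) * v2 l j)" by (rule sum.cong) (auto simp: v_def)
    have v2': "(\<Sum>l<m2. c (m1 + l) * v2 l j) = (1 - lam) * (\<Sum>l<m2. c2 l * v2 l j)"
    proof -
      have "(\<Sum>l<m2. c (m1 + l) * v2 l j) = (\<Sum>l<m2. (1 - lam) * (c2 l * v2 l j))"
        by (rule sum.cong) (auto simp: c_def)
      then show ?thesis by (simp add: sum_distrib_left)
    qed
    show "lam * x j + (1 - lam) * y j = (\<Sum>l<m1 + m2. c l * v l j)"
      unfolding cvx_sum_split v1 v2 v2' s1[of "\<lambda>l. v1 l j"] 1(3) 2(3) by simp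
  qed
  show ?thesis by (rule cvx_I[OF a b e])
qed

lemma cvx_single: "v \<in> S \<Longrightarrow> v \<in> cvx_comb_hull S"
  by (rule cvx_I[of 1 "\<lambda>_. 1" "\<lambda>_. v"]) auto


context
  fixes n :: nat and p :: "nat \<Rightarrow> real \<times> real" and T :: "nat set set"
  assumes cc: "convex_ccw n p" and tr: "convex_triangulation n T"
begin

lemma below_eq:
  assumes d: "d \<in> Yface n p" and le: "\<forall>s\<in>segs n. d s \<le> dT n p T s"
  shows "d = dT n p T"
proof -
  define dt where "dt = dT n p T"
  define a where "a = amap n p d"
  define b where "b = area_vec n p T"
  have n3: "n \<ge> 3" using n3[OF cc] .
  have dtY: "dt \<in> Yface n p" unfolding dt_def by (rule dT_Yface[OF cc tr])
  have bam: "amap n p dt = b" unfolding dt_def b_def by (rule amap_dT[OF cc tr])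
  have ge: "b k \<le> a k" if k: "0 < k" "k < n - 1" for k
  proof -
    obtain k' where k': "k = Suc k'" using k not0_implies_Suc by blast
    have kn: "k < n" using k by simp
    have m1: "(k + n - 1) mod n = k'" using k' kn by simp
    have m2: "Suc k mod n = Suc k" using k by simp
    define D where "D = det3 (p k') (p k) (p (Suc k))"
    have Dp: "D > 0" unfolding D_def using det_pos[OF cc, of k' k "Suc k"] k k' unfolding cyc_def by simp
    have "{k', Suc k} \<in> segs n" using k k' segs_iff by auto
    then have "d {k', Suc k} \<le> dt {k', Suc k}" using le unfolding dt_def by blast
    then have "- dt {k', Suc k} / D \<le> - d {k', Suc k} / D" using Dp by (simp add: divide_right_mono)
    moreover have "a k = - d {k', Suc k} / D + D" unfolding a_def D_def using amap_at[OF kn, of p d] m1 m2 by simp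
    moreover have "b k = - dt {k', Suc k} / D + D" unfolding bam[symmetric] D_def using amap_at[OF kn, of p dt] m1 m2 by simp
    ultimately show ?thesis by simp
  qed
  have z1: "Phi p a 0 (n - 1) = 0"
    using R3[OF cc d, of 0 "n - 1"] Yface_hull0[OF cc d] n3 unfolding a_def by simp
  have z2: "Phi p b 0 (n - 1) = 0"
    using R3[OF cc dtY, of 0 "n - 1"] Yface_hull0[OF cc dtY] n3 bam by simp
  define h where "h k = hh p 0 (n - 1) (p k)" for k
  have hp: "h k > 0" if "k \<in> {0<..<n - 1}" for k
    unfolding h_def hh_def using det_pos[OF cc, of 0 k "n - 1"] that n3 unfolding cyc_def by auto
  have "(\<Sum>k\<in>{0<..<n - 1}. h k * (a k - b k)) = Phi p b 0 (n - 1) - Phi p a 0 (n - 1)"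
    unfolding Phi_def h_def by (simp add: sum_subtractf algebra_simps)
  then have s0: "(\<Sum>k\<in>{0<..<n - 1}. h k * (a k - b k)) = 0" using z1 z2 by simp
  have nn: "\<forall>k\<in>{0<..<n - 1}. 0 \<le> h k * (a k - b k)"
  proof
    fix k assume k: "k \<in> {0<..<n - 1}"
    have "0 < h k" using hp[OF k] .
    moreover have "b k \<le> a k" using ge k by auto
    ultimately show "0 \<le> h k * (a k - b k)" by simp
  qed
  have "\<forall>k\<in>{0<..<n - 1}. h k * (a k - b k) = 0"
    using sum_nonneg_eq_0_iff[of "{0<..<n - 1}" "\<lambda>k. h k * (a k - b k)"] nn s0 by simp
  then have ab: "a k = b k" if "k \<in> {0<..<n - 1}" for k
  proof -
    have "h k * (a k - b k) = 0" using \<open>\<forall>k\<in>{0<..<n - 1}. h k * (a k - b k) = 0\<close> that by blast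
    then show ?thesis using hp[OF that] by simp
  qed
  have Peq: "Phi p a i j = Phi p b i j" if "i < j" "j < n" for i j
  proof -
    have "(\<Sum>k\<in>{i<..<j}. hh p i j (p k) * a k) = (\<Sum>k\<in>{i<..<j}. hh p i j (p k) * b k)"
      using ab that by (intro sum.cong) auto
    then show ?thesis unfolding Phi_def by simp
  qed
  have Yd: "d \<in> Yset n p" "dt \<in> Yset n p" using d dtY unfolding Yface_def by auto
  show ?thesis unfolding dt_def[symmetric]
  proof
    fix s
    show "d s = dt s"
    proof (cases "s \<in> segs n")
      case False then show ?thesis using Yd unfolding Yset_iff by simp
    next
      case True
      then obtain i j where ij: "s = {i, j}" "i < j" "j < n" using segsE by blast
      show ?thesis
      proof (cases "Suc i = j")
        case True then show ?thesis using Yface_hull[OF cc d, of i] Yface_hull[OF cc dtY, of i] ij by simp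
      next
        case False
        then have "Suc i < j" using ij by simp
        then show ?thesis using R3[OF cc d ij(2,3)] R3[OF cc dtY ij(2,3)] Peq[OF ij(2,3)] ij(1) bam
          unfolding a_def by simp
      qed
    qed
  qed
qed

end

context
  fixes n :: nat and p :: "nat \<Rightarrow> real \<times> real"
  assumes cc: "convex_ccw n p"
begin

lemma area_in_sec: "convex_triangulation n T \<Longrightarrow> area_vec n p T \<in> secondary_polytope n p"
  unfolding secondary_polytope_def by (rule cvx_single) blast

lemma walk: "d \<in> Yface n p \<Longrightarrow> amap n p d \<in> secondary_polytope n p"
proof (induction "card {s \<in> segs n. d s \<noteq> 0}" arbitrary: d rule: less_induct)
  case less
  have dY: "d \<in> Yface n p" by (rule less.prems)
  have dS: "d \<in> Yset n p" using dY unfolding Yface_def by blast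
  have L: "Lq n p d" and np: "\<forall>s\<in>segs n. d s \<le> 0" and off: "\<forall>s. s \<notin> segs n \<longrightarrow> d s = 0"
    using dS unfolding Yset_iff by auto
  have hz: "\<forall>i<n. d {i, Suc i mod n} = 0" using dY unfolding Yface_def by blast
  have n3: "n \<ge> 3" using n3[OF cc] .
  define Z where "Z = {s \<in> segs n. d s = 0}"
  have Zs: "Z \<subseteq> segs n" unfolding Z_def by blast
  have Znc: "\<forall>s\<in>Z. \<forall>t\<in>Z. noncrossing s t" unfolding Z_def using zeros_nc[OF cc dS] by blast
  have Zh: "\<forall>i<n. {i, Suc i mod n} \<in> Z"
  proof (intro allI impI)
    fix i assume i: "i < n"
    have "i \<noteq> Suc i mod n"
    proof (cases "Suc i < n")
      case True then show ?thesis by simp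
    next
      case False then have "Suc i = n" using i by simp
      then show ?thesis using n3 by simp
    qed
    then have "{i, Suc i mod n} \<in> segs n" using i n3 segs_iff by auto
    then show "{i, Suc i mod n} \<in> Z" unfolding Z_def using hz i by blast
  qed
  obtain T where T: "convex_triangulation n T" "Z \<subseteq> T" using extend_tri[OF Zs Znc Zh] by blast
  define dt where "dt = dT n p T"
  have dtY: "dt \<in> Yface n p" unfolding dt_def by (rule dT_Yface[OF cc T(1)])
  have dtS: "dt \<in> Yset n p" using dtY unfolding Yface_def by blast
  have Ldt: "Lq n p dt" and offt: "\<forall>s. s \<notin> segs n \<longrightarrow> dt s = 0" using dtS unfolding Yset_iff by auto
  have amt: "amap n p dt = area_vec n p T" unfolding dt_def by (rule amap_dT[OF cc T(1)])
  have dtz: "dt s = 0" if "s \<in> segs n" "d s = 0" for s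
    using dT_zero[OF cc T(1)] T(2) that unfolding dt_def Z_def by blast
  show ?case
  proof (cases "\<forall>s\<in>segs n. d s \<le> dt s")
    case True
    then have "d = dt" unfolding dt_def using below_eq[OF cc T(1) dY] by simp
    then show ?thesis using amt area_in_sec T(1) by simp
  next
    case False
    then obtain s0 where s0: "s0 \<in> segs n" "d s0 > dt s0" by force
    define E where "E = {s \<in> segs n. d s > dt s}"
    have finE: "finite E" unfolding E_def using finite_segs by simp
    have s0E: "s0 \<in> E" unfolding E_def using s0 by simp
    have dneg: "d s < 0" if "s \<in> E" for s
    proof -
      have s: "s \<in> segs n" "d s > dt s" using that unfolding E_def by auto
      have "d s \<noteq> 0" using dtz s by force
      then show ?thesis using np s by force
    qed
    define r where "r s = - d s / (d s - dt s)" for s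
    have rpos: "r s > 0" if "s \<in> E" for s
    proof -
      have "d s - dt s > 0" using that unfolding E_def by simp
      then have "d s / (d s - dt s) < 0" using divide_neg_pos[OF dneg[OF that]] by simp
      then show ?thesis unfolding r_def by simp
    qed
    define t where "t = Min (r ` E)"
    have tin: "t \<in> r ` E" unfolding t_def using finE s0E by (intro Min_in) auto
    then obtain s1 where s1: "s1 \<in> E" "r s1 = t" by auto
    have tle: "t \<le> r s" if "s \<in> E" for s unfolding t_def using finE that by simp
    have tpos: "t > 0" using rpos s1 by auto
    define e where "e = (\<lambda>s. (1 + t) * d s + (- t) * dt s)"
    have eY: "e \<in> Yface n p"
    proof -
      have "e \<in> Yset n p" unfolding Yset_iff
      proof (intro conjI allI impI ballI)
        show "e s = 0" if "s \<notin> segs n" for s unfolding e_def using off offt that by simp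
        show "Lq n p e" unfolding Lq_def
        proof (intro allI impI)
          fix a b c e' assume "a < n \<and> b < n \<and> c < n \<and> e' < n \<and> distinct [a, b, c, e']"
          then have "Qx p d a b c e' = 1" "Qx p dt a b c e' = 1" using L Ldt unfolding Lq_def by auto
          then show "Qx p e a b c e' = 1" unfolding e_def Qx_lin by simp
        qed
        show "e s \<le> 0" if s: "s \<in> segs n" for s
        proof (cases "s \<in> E")
          case True
          have dd: "d s - dt s > 0" using True unfolding E_def by simp
          have "t \<le> - d s / (d s - dt s)" using tle[OF True] unfolding r_def .
          then have "t * (d s - dt s) \<le> - d s" using pos_le_divide_eq[OF dd, of t "- d s"] by simp
          then show ?thesis unfolding e_def by (simp add: algebra_simps)
        next
          case False
          then have "d s - dt s \<le> 0" using s unfolding E_def by simp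
          then have "t * (d s - dt s) \<le> 0" using tpos by (simp add: mult_nonneg_nonpos)
          moreover have "d s \<le> 0" using np s by blast
          ultimately show ?thesis unfolding e_def by (simp add: algebra_simps)
        qed
      qed
      moreover have "\<forall>i<n. e {i, Suc i mod n} = 0"
        using hz dtY unfolding e_def Yface_def by simp
      ultimately show ?thesis unfolding Yface_def by blast
    qed
    have sub: "{s \<in> segs n. e s \<noteq> 0} \<subset> {s \<in> segs n. d s \<noteq> 0}"
    proof
      show "{s \<in> segs n. e s \<noteq> 0} \<subseteq> {s \<in> segs n. d s \<noteq> 0}"
        using dtz unfolding e_def by auto
      have "s1 \<in> segs n" using s1 unfolding E_def by simp
      moreover have "d s1 \<noteq> 0" using dneg[OF s1(1)] by simp
      moreover have "e s1 = 0"
      proof -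
        have dd: "d s1 - dt s1 \<noteq> 0" using s1 unfolding E_def by simp
        have "e s1 = d s1 + t * (d s1 - dt s1)" unfolding e_def by (simp add: algebra_simps)
        also have "\<dots> = 0" unfolding s1(2)[symmetric] r_def using dd by simp
        finally show ?thesis .
      qed
      ultimately show "{s \<in> segs n. e s \<noteq> 0} \<noteq> {s \<in> segs n. d s \<noteq> 0}" by blast
    qed
    have "card {s \<in> segs n. e s \<noteq> 0} < card {s \<in> segs n. d s \<noteq> 0}"
      by (rule psubset_card_mono[OF _ sub]) (simp add: finite_segs)
    then have IH: "amap n p e \<in> secondary_polytope n p" using less.hyps eY by blast
    define lam where "lam = 1 / (1 + t)"
    have l01: "0 \<le> lam" "lam \<le> 1" unfolding lam_def using tpos by auto
    have dcomb: "d = (\<lambda>s. lam * e s + (1 - lam) * dt s)"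
    proof
      fix s
      have "lam * e s + (1 - lam) * dt s = lam * ((1 + t) * d s) - lam * t * dt s + (1 - lam) * dt s"
        unfolding e_def by (simp add: algebra_simps)
      also have "\<dots> = (lam + lam * t) * d s + (1 - (lam + lam * t)) * dt s" by (simp add: algebra_simps)
      also have "lam + lam * t = 1" unfolding lam_def using tpos by (simp add: field_simps)
      finally have "lam * e s + (1 - lam) * dt s = d s" by simp
      then show "d s = lam * e s + (1 - lam) * dt s" by simp
    qed
    have "amap n p d = (\<lambda>i. lam * amap n p e i + (1 - lam) * amap n p dt i)"
      unfolding dcomb by (rule amap_comb)
    also have "\<dots> \<in> secondary_polytope n p" unfolding secondary_polytope_def amt
      by (rule cvx_bin[OF IH[unfolded secondary_polytope_def] area_in_sec[OF T(1), unfolded secondary_polytope_def] l01])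
    finally show ?thesis .
  qed
qed

lemma sup_dir:
  assumes x: "x \<in> secondary_polytope n p"
  shows "x \<in> amap n p ` Yface n p"
proof -
  obtain m :: nat and c v where mcv: "\<forall>l<m. 0 \<le> c l \<and> v l \<in> {area_vec n p T |T. convex_triangulation n T}"
    "(\<Sum>l<m. c l) = 1" "x = (\<lambda>j. \<Sum>l<m. c l * v l j)"
    using x unfolding secondary_polytope_def by (rule cvx_E)
  have "\<forall>l\<in>{..<m}. \<exists>T. convex_triangulation n T \<and> v l = area_vec n p T" using mcv(1) by auto
  then obtain TT where TT: "\<forall>l\<in>{..<m}. convex_triangulation n (TT l) \<and> v l = area_vec n p (TT l)"
    by (metis bchoice)
  define d where "d = (\<lambda>s. \<Sum>l<m. c l * dT n p (TT l) s)"
  have Yl: "dT n p (TT l) \<in> Yface n p" if "l < m" for l using dT_Yface[OF cc] TT that by blast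
  have Sl: "dT n p (TT l) \<in> Yset n p" if "l < m" for l using Yl[OF that] unfolding Yface_def by blast
  have dY: "d \<in> Yface n p"
  proof -
    have "d \<in> Yset n p" unfolding Yset_iff
    proof (intro conjI allI impI ballI)
      show "d s = 0" if "s \<notin> segs n" for s
        unfolding d_def using Sl that unfolding Yset_iff by simp
      show "d s \<le> 0" if "s \<in> segs n" for s
        unfolding d_def using Sl that mcv(1) unfolding Yset_iff
        by (intro sum_nonpos) (simp add: mult_nonneg_nonpos)
      show "Lq n p d" unfolding Lq_def
      proof (intro allI impI)
        fix a b cc' e assume A: "a < n \<and> b < n \<and> cc' < n \<and> e < n \<and> distinct [a, b, cc', e]"
        have "Qx p d a b cc' e = (\<Sum>l<m. c l * Qx p (dT n p (TT l)) a b cc' e)"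
          unfolding d_def by (rule Qx_sum)
        also have "\<dots> = (\<Sum>l<m. c l)" using Sl A unfolding Yset_iff Lq_def by (intro sum.cong) auto
        finally show "Qx p d a b cc' e = 1" using mcv(2) by simp
      qed
    qed
    moreover have "\<forall>i<n. d {i, Suc i mod n} = 0" unfolding d_def using Yl unfolding Yface_def by simp
    ultimately show ?thesis unfolding Yface_def by blast
  qed
  have "amap n p d = x"
  proof
    fix i
    show "amap n p d i = x i"
    proof (cases "i < n")
      case False
      have "x i = (\<Sum>l<m. c l * v l i)" using mcv(3) by simp
      also have "\<dots> = 0" using TT False unfolding area_vec_def by (intro sum.neutral) auto
      finally show ?thesis using False by (simp add: amap_out)
    next
      case True
      define P where "P = {(i + n - 1) mod n, Suc i mod n}"
      define D where "D = det3 (p ((i + n - 1) mod n)) (p i) (p (Suc i mod n))"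
      have "amap n p d i = - (\<Sum>l<m. c l * dT n p (TT l) P) / D + D"
        using amap_at[OF True, of p d] unfolding d_def P_def D_def by simp
      also have "\<dots> = (\<Sum>l<m. c l * (- dT n p (TT l) P / D + D))"
      proof -
        define X where "X l = dT n p (TT l) P" for l
        have "(\<Sum>l<m. c l * (- X l / D + D)) = (\<Sum>l<m. D * c l - (c l * X l) / D)"
          by (rule sum.cong) (auto simp: algebra_simps)
        also have "\<dots> = D * (\<Sum>l<m. c l) - (\<Sum>l<m. c l * X l) / D"
          by (simp add: sum_subtractf sum_distrib_left sum_divide_distrib)
        finally show ?thesis using mcv(2) unfolding X_def by simp
      qed
      also have "\<dots> = (\<Sum>l<m. c l * amap n p (dT n p (TT l)) i)"
        using amap_at[OF True] unfolding P_def D_def by simp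
      also have "\<dots> = (\<Sum>l<m. c l * v l i)"
        using TT amap_dT[OF cc] by (intro sum.cong) auto
      also have "\<dots> = x i" using mcv(3) by simp
      finally show ?thesis .
    qed
  qed
  then show ?thesis using dY by blast
qed

end

theorem corollary5p5:
  fixes n :: nat and p :: "nat \<Rightarrow> real \<times> real"
  assumes "convex_ccw n p"
  shows "(\<forall>T d. convex_triangulation n T \<and> d \<in> Yset n p \<and> (\<forall>e\<in>T. d e = 0)
              \<longrightarrow> amap n p d = area_vec n p T)
       \<and> amap n p ` Yface n p = secondary_polytope n p"
proof
  show "\<forall>T d. convex_triangulation n T \<and> d \<in> Yset n p \<and> (\<forall>e\<in>T. d e = 0)
              \<longrightarrow> amap n p d = area_vec n p T"
    using part1[OF assms] by blast
  show "amap n p ` Yface n p = secondary_polytope n p"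
    using walk[OF assms] sup_dir[OF assms] by blast
qed

end
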